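(* Let $C\in\{0.15,0.45\}$ and define on $[-\pi,\pi]$ $$z_1(x)=2e^{1-\frac{1}{1-(x/\pi)^2}}-1,\qquad z_2(x)=\sin(x-C),$$ where $z_1(\pm\pi)=-1$ (the continuous, indeed smooth, extension). Then the curvature $$K(x)=\frac{-\partial_{xx}z_1(x)\,\partial_x z_2(x)+\partial_{xx}z_2(x)\,\partial_x z_1(x)}{\big(\partial_x z_1(x)^2+\partial_x z_2(x)^2\big)^{3/2}}$$ of the closed curve $x\mapsto(z_1(x),z_2(x))$ vanishes, for $x\in(-\pi,\pi]$, only at $x=\pi$.
   Context: Derivatives of $z_1$ at $x=\pm\pi$ are understood as limits (all of them equal $0$); the curve $(z_1,z_2)$ is regarded as $2\pi$-periodic, so $x=-\pi$ and $x=\pi$ represent the same point. *)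

theory Defs
  imports "HOL-Analysis.Analysis"
begin

text \<open>Outside
  [-pi, pi] we extend it by the constant -1, which is a smooth (flat) extension, so that the
  derivatives at pi and -pi (computed as genuine two-sided derivatives) coincide with the
  one-sided limits, all equal to 0.\<close>
definition z1 :: "real \<Rightarrow> real" where
  "z1 x = (if \<bar>x\<bar> < pi then 2 * exp (1 - 1 / (1 - (x / pi)^2)) - 1 else -1)"

definition z2 :: "real \<Rightarrow> real \<Rightarrow> real" where
  "z2 C x = sin (x - C)"

definition curvature :: "real \<Rightarrow> real \<Rightarrow> real" where
  "curvature C x =
     (- deriv (deriv z1) x * deriv (z2 C) x + deriv (deriv (z2 C)) x * deriv z1 x)
     / ((deriv z1 x)^2 + (deriv (z2 C) x)^2) powr (3/2)"

end

theory Submission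
  imports Defs "HOL-Analysis.Analysis" "HOL-Real_Asymp.Real_Asymp"
begin
definition Psin :: "real \<Rightarrow> real" where
 "Psin x = x + (-1/6) * x^3 + (1/120) * x^5 + (-1/5040) * x^7 + (1/362880) * x^9 + (-1/39916800) * x^11 + (1/6227020800) * x^13 + (-1/1307674368000) * x^15 + (1/355687428096000) * x^17 + (-1/121645100408832000) * x^19"
definition Pcos :: "real \<Rightarrow> real" where
 "Pcos x = 1 + (-1/2) * x^2 + (1/24) * x^4 + (-1/720) * x^6 + (1/40320) * x^8 + (-1/3628800) * x^10 + (1/479001600) * x^12 + (-1/87178291200) * x^14 + (1/20922789888000) * x^16 + (-1/6402373705728000) * x^18"

lemma Psin_eq: "(\<Sum>m<21. sin_coeff m * x ^ m) = Psin x"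
  by (simp add: Psin_def sin_coeff_def lessThan_nat_numeral fact_numeral)

lemma Pcos_eq: "(\<Sum>m<20. cos_coeff m * x ^ m) = Pcos x"
  by (simp add: Pcos_def cos_coeff_def lessThan_nat_numeral fact_numeral)

lemma fact21: "fact 21 = (51090942171709440000::real)" by (simp add: fact_numeral)
lemma fact20: "fact 20 = (2432902008176640000::real)" by (simp add: fact_numeral)

lemma sin_approx:
  assumes "\<bar>Psin x - sv\<bar> + \<bar>x\<bar>^21 / 51090942171709440000 \<le> e"
  shows "\<bar>sin x - sv\<bar> \<le> e"
proof -
  have "\<bar>sin x - Psin x\<bar> \<le> inverse (fact 21) * \<bar>x\<bar>^21"
    using Maclaurin_sin_bound[of x 21] unfolding Psin_eq .
  also have "inverse (fact 21) * \<bar>x\<bar>^21 = \<bar>x\<bar>^21 / 51090942171709440000"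
    unfolding fact21 by (simp only: divide_inverse mult.commute)
  finally show ?thesis using assms by linarith
qed

lemma cos_approx:
  assumes "\<bar>Pcos x - cv\<bar> + \<bar>x\<bar>^20 / 2432902008176640000 \<le> e"
  shows "\<bar>cos x - cv\<bar> \<le> e"
proof -
  obtain s where s: "cos x = (\<Sum>m<20. cos_coeff m * x ^ m) + (cos (s + 1/2 * real 20 * pi) / fact 20) * x ^ 20"
    using Maclaurin_cos_expansion[of x 20] by blast
  define c where "c = cos (s + 1/2 * real 20 * pi)"
  have s2: "cos x - Pcos x = c / fact 20 * x ^ 20" using s unfolding Pcos_eq c_def by simp
  have "\<bar>c / fact 20 * x ^ 20\<bar> = \<bar>c\<bar> * \<bar>x\<bar>^20 / fact 20"
  proof -
    have "\<bar>fact 20 :: real\<bar> = fact 20" by simp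
    then show ?thesis by (simp only: abs_mult abs_divide power_abs) (metis mult.commute times_divide_eq_right)
  qed
  also have "\<dots> \<le> \<bar>x\<bar>^20 / fact 20"
    by (intro divide_right_mono mult_left_le_one_le) (auto simp: c_def)
  finally have "\<bar>cos x - Pcos x\<bar> \<le> \<bar>x\<bar>^20 / 2432902008176640000"
    unfolding s2 fact20 .
  then show ?thesis using assms by linarith
qed

definition inI :: "real \<Rightarrow> real \<times> real \<Rightarrow> bool" where "inI x I \<longleftrightarrow> fst I \<le> x \<and> x \<le> snd I"
definition sub :: "real\<times>real \<Rightarrow> real\<times>real \<Rightarrow> bool" where "sub I J \<longleftrightarrow> fst J \<le> fst I \<and> snd I \<le> snd J"
definition imul :: "real\<times>real \<Rightarrow> real\<times>real \<Rightarrow> real\<times>real" where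
  "imul I J = (min (min (fst I * fst J) (fst I * snd J)) (min (snd I * fst J) (snd I * snd J)),
               max (max (fst I * fst J) (fst I * snd J)) (max (snd I * fst J) (snd I * snd J)))"
definition isq :: "real\<times>real \<Rightarrow> real\<times>real" where
  "isq I = (if 0 \<le> fst I then (fst I^2, snd I^2) else if snd I \<le> 0 then (snd I^2, fst I^2) else (0, max (fst I^2) (snd I^2)))"
definition iadd :: "real\<times>real \<Rightarrow> real\<times>real \<Rightarrow> real\<times>real" where "iadd I J = (fst I + fst J, snd I + snd J)"
definition isb :: "real\<times>real \<Rightarrow> real\<times>real \<Rightarrow> real\<times>real" where "isb I J = (fst I - snd J, snd I - fst J)"

lemma inI_sub: "inI x I \<Longrightarrow> sub I J \<Longrightarrow> inI x J" by (auto simp: inI_def sub_def)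
lemma inI_add: "inI x I \<Longrightarrow> inI y J \<Longrightarrow> inI (x+y) (iadd I J)" by (auto simp: inI_def iadd_def)
lemma inI_isb: "inI x I \<Longrightarrow> inI y J \<Longrightarrow> inI (x-y) (isb I J)" by (auto simp: inI_def isb_def)
lemma inI_mul: assumes "inI x I" "inI y J" shows "inI (x*y) (imul I J)"
proof -
  obtain a b c d where I: "I = (a,b)" and J: "J = (c,d)" by (cases I, cases J) auto
  have x: "a \<le> x" "x \<le> b" and y: "c \<le> y" "y \<le> d" using assms by (auto simp: inI_def I J)
  have 1: "min (a*y) (b*y) \<le> x*y \<and> x*y \<le> max (a*y) (b*y)"
  proof (cases "0 \<le> y")
    case True then show ?thesis using x mult_right_mono by (smt (verit))
  next
    case False then show ?thesis using x mult_right_mono_neg by (smt (verit))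
  qed
  have 2: "min (a*c) (a*d) \<le> a*y \<and> a*y \<le> max (a*c) (a*d)"
  proof (cases "0 \<le> a")
    case True then show ?thesis using y mult_left_mono by (smt (verit))
  next
    case False then show ?thesis using y mult_left_mono_neg by (smt (verit))
  qed
  have 3: "min (b*c) (b*d) \<le> b*y \<and> b*y \<le> max (b*c) (b*d)"
  proof (cases "0 \<le> b")
    case True then show ?thesis using y mult_left_mono by (smt (verit))
  next
    case False then show ?thesis using y mult_left_mono_neg by (smt (verit))
  qed
  show ?thesis using 1 2 3 by (simp add: inI_def imul_def I J) linarith
qed
lemma inI_sq: assumes "inI x I" shows "inI (x^2) (isq I)"
proof -
  obtain a b where I: "I = (a,b)" by (cases I) auto
  have x: "a \<le> x" "x \<le> b" using assms by (auto simp: inI_def I)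
  show ?thesis
  proof (cases "0 \<le> a")
    case True then show ?thesis using x by (simp add: inI_def isq_def I power_mono)
  next
    case F: False
    show ?thesis
    proof (cases "b \<le> 0")
      case True
      have "(-b)^2 \<le> (-x)^2" "(-x)^2 \<le> (-a)^2" using x True F by (intro power_mono; simp)+
      then have "b^2 \<le> x^2" "x^2 \<le> a^2" by simp_all
      then show ?thesis using F True by (simp add: inI_def isq_def I)
    next
      case False
      have "x^2 \<le> max (a^2) (b^2)"
      proof (cases "0 \<le> x")
        case True then have "x^2 \<le> b^2" using x by (simp add: power_mono)
        then show ?thesis by simp
      next
        case False then have "(-x)^2 \<le> (-a)^2" using x by (intro power_mono) auto
        then show ?thesis by simp
      qed
      then show ?thesis using F False by (simp add: inI_def isq_def I)
    qed
  qed
qed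


definition inZ :: "int \<Rightarrow> real \<Rightarrow> int \<times> int \<Rightarrow> bool" where
  "inZ S x I \<longleftrightarrow> real_of_int (fst I) / real_of_int S \<le> x \<and> x \<le> real_of_int (snd I) / real_of_int S"

definition mulchk :: "int \<Rightarrow> int \<times> int \<Rightarrow> int \<times> int \<Rightarrow> int \<times> int \<Rightarrow> bool" where
  "mulchk S I J K \<longleftrightarrow>
    fst K * S \<le> fst I * fst J \<and> fst K * S \<le> fst I * snd J \<and> fst K * S \<le> snd I * fst J \<and> fst K * S \<le> snd I * snd J \<and>
    fst I * fst J \<le> snd K * S \<and> fst I * snd J \<le> snd K * S \<and> snd I * fst J \<le> snd K * S \<and> snd I * snd J \<le> snd K * S"

lemma inZ_mul:
  assumes S: "0 < S" and x: "inZ S x I" and y: "inZ S y J" and c: "mulchk S I J K"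
  shows "inZ S (x*y) K"
proof -
  obtain a b where I: "I = (a,b)" by (cases I) auto
  obtain c d where J: "J = (c,d)" by (cases J) auto
  obtain k1 k2 where K: "K = (k1,k2)" by (cases K) auto
  define sc where "sc = real_of_int S"
  have sc: "sc > 0" using S by (simp add: sc_def)
  have "inI (x*y) (imul (a/sc, b/sc) (c/sc, d/sc))"
    by (rule inI_mul) (use x y in \<open>simp_all add: inI_def inZ_def I J sc_def\<close>)
  then have m: "min (min (a/sc *(c/sc)) (a/sc *(d/sc))) (min (b/sc *(c/sc)) (b/sc *(d/sc))) \<le> x*y"
    "x*y \<le> max (max (a/sc *(c/sc)) (a/sc *(d/sc))) (max (b/sc *(c/sc)) (b/sc *(d/sc)))"
    by (simp_all add: inI_def imul_def)
  have e: "p/sc *(q/sc) = (p*q)/(sc * sc)" for p q :: real by simp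
  have cc: "real_of_int k1 * sc \<le> a*c" "real_of_int k1 * sc \<le> a*d" "real_of_int k1 * sc \<le> b*c" "real_of_int k1 * sc \<le> b*d"
       "a*c \<le> real_of_int k2 * sc" "a*d \<le> real_of_int k2 * sc" "b*c \<le> real_of_int k2 * sc" "b*d \<le> real_of_int k2 * sc"
    using c unfolding mulchk_def I J K sc_def by (simp_all only: fst_conv snd_conv of_int_mult[symmetric] of_int_le_iff)
  have ss: "sc * sc > 0" using sc by simp
  have lo: "\<And>p. real_of_int k1 * sc \<le> p \<Longrightarrow> k1 / sc \<le> p/(sc * sc)"
    using sc by (simp add: field_simps)
  have hi: "\<And>p. p \<le> real_of_int k2 * sc \<Longrightarrow> p/(sc * sc) \<le> k2 / sc"
    using sc by (simp add: field_simps)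
  have "k1/sc \<le> x*y"
    apply (rule order_trans[OF _ m(1)])
    using lo[OF cc(1)] lo[OF cc(2)] lo[OF cc(3)] lo[OF cc(4)] by (simp add: e)
  moreover have "x*y \<le> k2/sc"
    apply (rule order_trans[OF m(2)])
    using hi[OF cc(5)] hi[OF cc(6)] hi[OF cc(7)] hi[OF cc(8)] by (simp add: e)
  ultimately show ?thesis by (simp add: inZ_def K sc_def)
qed

lemma inZ_add: "inZ S x I \<Longrightarrow> inZ S y J \<Longrightarrow> 0 < S \<Longrightarrow> inZ S (x+y) (fst I + fst J, snd I + snd J)"
  by (auto simp: inZ_def add_divide_distrib)
lemma inZ_sub: "inZ S x I \<Longrightarrow> inZ S y J \<Longrightarrow> 0 < S \<Longrightarrow> inZ S (x-y) (fst I - snd J, snd I - fst J)"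
  by (auto simp: inZ_def diff_divide_distrib)

definition FF :: "real \<Rightarrow> real \<Rightarrow> real" where
  "FF C t = (6*(t/pi)^4 - 2) * cos (t - C) - 2*t*(1 - (t/pi)^2)^2 * sin (t - C)"

lemma pi_bnds: "333/106 \<le> pi" "pi \<le> 355/113"
  using pi_approx by simp_all

lemma cos_lower: "1 - (x::real)^2/2 \<le> cos x"
proof -
  have "cos x = 1 - 2 * (sin (x/2))^2" using cos_double_sin[of "x/2"] by simp
  moreover have "(sin (x/2))^2 \<le> (x/2)^2"
    using abs_sin_x_le_abs_x[of "x/2"] by (metis abs_ge_zero power2_abs power_mono)
  ultimately show ?thesis by (simp add: power_divide)
qed


lemma inv_pi: "inZ 1000000000000 (1/pi) (318309859154, 318318318319)"
  using pi_bnds by (simp add: inZ_def field_simps)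

lemma cellZ:
  fixes S L H M CC SV CV E R CDl :: int and t C mm :: real and U UA UB WW B PA PB PC PD PE PF :: "int \<times> int"
  assumes S: "0 < S" and Q: "inZ S (1/pi) QQ"
   and t: "real_of_int L / S \<le> t" "t \<le> real_of_int H / S"
   and mC: "mm = real_of_int M / S" "C = real_of_int CC / S"
   and tr: "\<bar>sin mm - real_of_int SV / S\<bar> \<le> real_of_int E / S" "\<bar>cos mm - real_of_int CV / S\<bar> \<le> real_of_int E / S"
   and rr: "M - R \<le> L - CC" "H - CC \<le> M + R"
   and cU: "mulchk S (L,H) QQ U" and cUA: "mulchk S U U UA" and cUB: "mulchk S UA UA UB"
   and cWW: "mulchk S (S - snd UA, S - fst UA) (S - snd UA, S - fst UA) WW"
   and cB: "mulchk S (2*L, 2*H) WW B"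
   and cCD: "2*S*CDl \<le> 2*S*S - R*R"
   and c1: "mulchk S (SV-E, SV+E) (CDl, S) PA" and c2: "mulchk S (CV-E, CV+E) (-R, R) PB"
   and c3: "mulchk S (CV-E, CV+E) (CDl, S) PC" and c4: "mulchk S (SV-E, SV+E) (-R, R) PD"
   and c5: "mulchk S (6 * fst UB - 2*S, 6 * snd UB - 2*S) (fst PC - snd PD, snd PC - fst PD) PE"
   and c6: "mulchk S B (fst PA + fst PB, snd PA + snd PB) PF"
   and fin: "snd PE - fst PF < 0"
  shows "FF C t < 0"
proof -
  define sc where "sc = real_of_int S"
  have sc: "sc > 0" using S by (simp add: sc_def)
  define u where "u = t / pi"
  have it: "inZ S t (L,H)" using t by (simp add: inZ_def)
  have iu: "inZ S u U" using inZ_mul[OF S it Q cU] by (simp add: u_def)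
  have iu2: "inZ S (u*u) UA" by (rule inZ_mul[OF S iu iu cUA])
  have iu4: "inZ S ((u*u)*(u*u)) UB" by (rule inZ_mul[OF S iu2 iu2 cUB])
  have iA: "inZ S (6*u^4 - 2) (6 * fst UB - 2*S, 6 * snd UB - 2*S)"
  proof -
    have e: "(u*u)*(u*u) = u^4" by (simp add: power4_eq_xxxx)
    have "real_of_int (fst UB) / sc \<le> u^4" "u^4 \<le> real_of_int (snd UB) / sc" using iu4 by (simp_all add: inZ_def e sc_def)
    then show ?thesis using sc by (simp add: inZ_def sc_def[symmetric] field_simps)
  qed
  have iw: "inZ S (1 - u*u) (S - snd UA, S - fst UA)"
  proof -
    have "real_of_int (fst UA) / sc \<le> u*u" "u*u \<le> real_of_int (snd UA) / sc" using iu2 by (simp_all add: inZ_def sc_def)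
    then show ?thesis using sc by (simp add: inZ_def sc_def[symmetric] field_simps)
  qed
  have iw2: "inZ S ((1 - u*u)*(1 - u*u)) WW" by (rule inZ_mul[OF S iw iw cWW])
  have it2: "inZ S (2*t) (2*L, 2*H)" using t by (simp add: inZ_def)
  have iB: "inZ S (2*t*((1 - u*u)*(1 - u*u))) B" by (rule inZ_mul[OF S it2 iw2 cB])
  define d where "d = t - C - mm"
  have "real_of_int (M - R) / sc \<le> real_of_int (L - CC) / sc" "real_of_int (H - CC) / sc \<le> real_of_int (M + R) / sc"
    using rr sc by (simp_all add: divide_right_mono)
  then have dr: "\<bar>d\<bar> \<le> real_of_int R / sc" using t mC unfolding d_def sc_def[symmetric]
    by (simp add: diff_divide_distrib add_divide_distrib abs_le_iff)
  have isd: "inZ S (sin d) (-R, R)" using abs_sin_x_le_abs_x[of d] dr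
    by (simp add: inZ_def abs_le_iff sc_def[symmetric]) linarith
  have "d^2 \<le> (real_of_int R / sc)^2" using dr by (metis abs_ge_zero power2_abs power_mono)
  then have "1 - (real_of_int R / sc)^2/2 \<le> cos d" using cos_lower[of d] by linarith
  moreover have "real_of_int CDl / sc \<le> 1 - (real_of_int R / sc)^2/2"
  proof -
    have "real_of_int (2*S*CDl) \<le> real_of_int (2*S*S - R*R)" using cCD by (simp only: of_int_le_iff)
    then have "2* sc *CDl \<le> 2* sc * sc - R*R" by (simp add: sc_def)
    then show ?thesis using sc by (simp add: field_simps power2_eq_square)
  qed
  ultimately have icd: "inZ S (cos d) (CDl, S)" using sc by (simp add: inZ_def sc_def[symmetric])
  have is0: "inZ S (sin mm) (SV-E, SV+E)" "inZ S (cos mm) (CV-E, CV+E)"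
    using tr sc by (simp_all add: inZ_def sc_def[symmetric] abs_le_iff diff_divide_distrib add_divide_distrib)
  have tC: "t - C = mm + d" by (simp add: d_def)
  have iSN: "inZ S (sin (t - C)) (fst PA + fst PB, snd PA + snd PB)"
    unfolding tC sin_add by (rule inZ_add[OF inZ_mul[OF S is0(1) icd c1] inZ_mul[OF S is0(2) isd c2] S])
  have iCS: "inZ S (cos (t - C)) (fst PC - snd PD, snd PC - fst PD)"
    unfolding tC cos_add by (rule inZ_sub[OF inZ_mul[OF S is0(2) icd c3] inZ_mul[OF S is0(1) isd c4] S])
  have i5: "inZ S ((6*u^4 - 2) * cos (t - C)) PE" by (rule inZ_mul[OF S iA iCS c5])
  have i6: "inZ S (2*t*((1 - u*u)*(1 - u*u)) * sin (t - C)) PF" by (rule inZ_mul[OF S iB iSN c6])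
  have "FF C t = (6*u^4 - 2) * cos (t - C) - 2*t*((1 - u*u)*(1 - u*u)) * sin (t - C)"
    unfolding FF_def u_def by (simp add: power2_eq_square)
  also have "\<dots> \<le> real_of_int (snd PE) / sc - real_of_int (fst PF) / sc"
    using i5 i6 by (simp add: inZ_def sc_def)
  also have "\<dots> < 0"
  proof -
    have "real_of_int (snd PE - fst PF) < 0" using fin by simp
    then show ?thesis using sc by (simp add: diff_divide_distrib[symmetric] divide_neg_pos)
  qed
  finally show ?thesis .
qed

definition okI :: "real \<Rightarrow> real \<Rightarrow> real \<Rightarrow> bool" where
  "okI C a b \<longleftrightarrow> (\<forall>t. a \<le> t \<longrightarrow> t \<le> b \<longrightarrow> FF C t < 0)"

lemma okI_trans: "okI C a b \<Longrightarrow> okI C b c \<Longrightarrow> okI C a c"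
  unfolding okI_def by (meson linear)

lemma okI_cell: "(\<And>t. l \<le> t \<Longrightarrow> t \<le> h \<Longrightarrow> FF C t < 0) \<Longrightarrow> okI C l h"
  unfolding okI_def by blast

lemma ca_0: "okI 0.15 (real_of_int (-3141592920354) / real_of_int 1000000000000) (real_of_int (-3125000000000) / real_of_int 1000000000000)"
  apply (rule okI_cell, rule cellZ[where S="(1000000000000)" and L="(-3141592920354)" and H="(-3125000000000)" and M="(-3281250000000)" and CC="(150000000000)" and SV="(139203806709)" and CV="(-990263761436)" and E="(8605)" and R="(10342920354)" and CDl="(999946511999)" and mm="(-105/32)" and C="0.15" and QQ="(318309859154, 318318318319)" and U="(-1000026575250, -994718309856)" and UA="(989464515962, 1000053151207)" and UB="(979040028347, 1000106305240)" and WW="(-559974, 110996424)" and B="(-697411160, 3518421)" and PA="(139196352371, 139203815314)" and PB="(-10242219303, 10242219303)" and PC="(-990263770041, -990210785602)" and PD="(-1439773975, 1439773975)" and PE="(-3967446715764, -3830736372257)" and PF="(-104225333, 525815)"])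
  apply simp
  apply (rule inv_pi)
  apply assumption
  apply assumption
  apply simp
  apply simp
  apply (rule sin_approx, simp add: Psin_def power_divide)
  apply (rule cos_approx, simp add: Pcos_def power_divide)
  by (simp_all add: mulchk_def)

lemma ca_1: "okI 0.15 (real_of_int (-3125000000000) / real_of_int 1000000000000) (real_of_int (-3000000000000) / real_of_int 1000000000000)"
  apply (rule okI_cell, rule cellZ[where S="(1000000000000)" and L="(-3125000000000)" and H="(-3000000000000)" and M="(-3218750000000)" and CC="(150000000000)" and SV="(77080813834)" and CV="(-997024854101)" and E="(5858)" and R="(68750000000)" and CDl="(997636718750)" and mm="(-103/32)" and C="0.15" and QQ="(318309859154, 318318318319)" and U="(-994744744747, -954929577462)" and UA="(911890497911, 989517107202)" and UB="(831544280180, 979144105446)" and WW="(109891041, 7763284359)" and B="(-48520527244, -659346246)" and PA="(76898644347, 77080819692)" and PB="(-68545459123, 68545459123)" and PC="(-997024859959, -994668598113)" and PD="(-5299306354, 5299306354)" and PE="(-3883870462523, -2957487669769)" and PF="(-7065863829, -5507641)"])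
  apply simp
  apply (rule inv_pi)
  apply assumption
  apply assumption
  apply simp
  apply simp
  apply (rule sin_approx, simp add: Psin_def power_divide)
  apply (rule cos_approx, simp add: Pcos_def power_divide)
  by (simp_all add: mulchk_def)

lemma ca_2: "okI 0.15 (real_of_int (-3000000000000) / real_of_int 1000000000000) (real_of_int (-2875000000000) / real_of_int 1000000000000)"
  apply (rule okI_cell, rule cellZ[where S="(1000000000000)" and L="(-3000000000000)" and H="(-2875000000000)" and M="(-3093750000000)" and CC="(150000000000)" and SV="(-47824403965)" and CV="(-998855761128)" and E="(2654)" and R="(68750000000)" and CDl="(997636718750)" and mm="(-99/32)" and C="0.15" and QQ="(318309859154, 318318318319)" and U="(-954954954957, -915140845067)" and UA="(837482766309, 911938965997)" and UB="(701377383864, 831632677704)" and WW="(7754745709, 26411851247)" and B="(-158471107482, -44589787826)" and PA="(-47824406619, -47711378800)" and PB="(-68671333761, 68671333761)" and PC="(-998855763782, -996495181388)" and PD="(-3287927956, 3287927956)" and PE="(-2996205267350, -2193264123417)" and PF="(-3321547276, 18461208995)"])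
  apply simp
  apply (rule inv_pi)
  apply assumption
  apply assumption
  apply simp
  apply simp
  apply (rule sin_approx, simp add: Psin_def power_divide)
  apply (rule cos_approx, simp add: Pcos_def power_divide)
  by (simp_all add: mulchk_def)

lemma ca_3: "okI 0.15 (real_of_int (-2875000000000) / real_of_int 1000000000000) (real_of_int (-2750000000000) / real_of_int 1000000000000)"
  apply (rule okI_cell, rule cellZ[where S="(1000000000000)" and L="(-2875000000000)" and H="(-2750000000000)" and M="(-2968750000000)" and CC="(150000000000)" and SV="(-171983337654)" and CV="(-985099859791)" and E="(1164)" and R="(68750000000)" and CDl="(997636718750)" and mm="(-95/32)" and C="0.15" and QQ="(318309859154, 318318318319)" and U="(-915165165168, -875352112673)" and UA="(766241321161, 837527279537)" and UB="(587125762254, 701451943969)" and WW="(26397384894, 54643119933)" and B="(-314197939615, -145185616917)" and PA="(-171983338818, -171576891495)" and PB="(-67725615441, 67725615441)" and PC="(-985099860955, -982771790601)" and PD="(-11823854544, 11823854544)" and PE="(-2201917038356, -1478515410284)" and PF="(15077711581, 75316059536)"])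
  apply simp
  apply (rule inv_pi)
  apply assumption
  apply assumption
  apply simp
  apply simp
  apply (rule sin_approx, simp add: Psin_def power_divide)
  apply (rule cos_approx, simp add: Pcos_def power_divide)
  by (simp_all add: mulchk_def)

lemma ca_4: "okI 0.15 (real_of_int (-2750000000000) / real_of_int 1000000000000) (real_of_int (-2625000000000) / real_of_int 1000000000000)"
  apply (rule okI_cell, rule cellZ[where S="(1000000000000)" and L="(-2750000000000)" and H="(-2625000000000)" and M="(-2843750000000)" and CC="(150000000000)" and SV="(-293458528753)" and CV="(-955971805436)" and E="(494)" and R="(68750000000)" and CDl="(997636718750)" and mm="(-91/32)" and C="0.15" and QQ="(318309859154, 318318318319)" and U="(-875375375378, -835563380279)" and UA="(698166162463, 766282047819)" and UB="(487435990408, 587188176810)" and WW="(54624081171, 91103665483)" and B="(-501070160157, -286776426147)" and PA="(-293458529247, -292765003221)" and PB="(-65723061658, 65723061658)" and PC="(-955971805930, -953712574699)" and PD="(-20175273886, 20175273886)" and PE="(-1486797984942, -863163471201)" and PF="(65110276586, 179975177281)"])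
  apply simp
  apply (rule inv_pi)
  apply assumption
  apply assumption
  apply simp
  apply simp
  apply (rule sin_approx, simp add: Psin_def power_divide)
  apply (rule cos_approx, simp add: Pcos_def power_divide)
  by (simp_all add: mulchk_def)

lemma ca_5: "okI 0.15 (real_of_int (-2625000000000) / real_of_int 1000000000000) (real_of_int (-2500000000000) / real_of_int 1000000000000)"
  apply (rule okI_cell, rule cellZ[where S="(1000000000000)" and L="(-2625000000000)" and H="(-2500000000000)" and M="(-2718750000000)" and CC="(150000000000)" and SV="(-410354397603)" and CV="(-911926131168)" and E="(202)" and R="(68750000000)" and CDl="(997636718750)" and mm="(-87/32)" and C="0.15" and QQ="(318309859154, 318318318319)" and U="(-835585585588, -795774647885)" and UA="(633257290216, 698203270843)" and UB="(401014795611, 487487807416)" and WW="(91081265729, 134500215180)" and B="(-706126129695, -455406328645)" and PA="(-410354397805, -409384614547)" and PB="(-62694921532, 62694921532)" and PC="(-911926131370, -909770993039)" and PD="(-28211864850, 28211864850)" and PE="(-869558870235, -357991265280)" and PF="(157884680275, 334032485019)"])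
  apply simp
  apply (rule inv_pi)
  apply assumption
  apply assumption
  apply simp
  apply simp
  apply (rule sin_approx, simp add: Psin_def power_divide)
  apply (rule cos_approx, simp add: Pcos_def power_divide)
  by (simp_all add: mulchk_def)

lemma ca_6: "okI 0.15 (real_of_int (-2500000000000) / real_of_int 1000000000000) (real_of_int (-2375000000000) / real_of_int 1000000000000)"
  apply (rule okI_cell, rule cellZ[where S="(1000000000000)" and L="(-2500000000000)" and H="(-2375000000000)" and M="(-2593750000000)" and CC="(150000000000)" and SV="(-520846823300)" and CV="(-853650154794)" and E="(80)" and R="(68750000000)" and CDl="(997636718750)" and mm="(-83/32)" and C="0.15" and QQ="(318309859154, 318318318319)" and U="(-795795795798, -755985915490)" and UA="(571514704419, 633290948610)" and UB="(326629057367, 401057425592)" and WW="(134475528371, 183599648530)" and B="(-917998242650, -638758759762)" and PA="(-520846823380, -519615915688)" and PB="(-58688448148, 58688448148)" and PC="(-853650154874, -851632739309)" and PD="(-35808219108, 35808219108)" and PE="(-361426565879, 35779046399)" and PF="(294421457506, 532012360817)"])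
  apply simp
  apply (rule inv_pi)
  apply assumption
  apply assumption
  apply simp
  apply simp
  apply (rule sin_approx, simp add: Psin_def power_divide)
  apply (rule cos_approx, simp add: Pcos_def power_divide)
  by (simp_all add: mulchk_def)

lemma ca_7: "okI 0.15 (real_of_int (-2375000000000) / real_of_int 1000000000000) (real_of_int (-2250000000000) / real_of_int 1000000000000)"
  apply (rule okI_cell, rule cellZ[where S="(1000000000000)" and L="(-2375000000000)" and H="(-2250000000000)" and M="(-2468750000000)" and CC="(150000000000)" and SV="(-623211608512)" and CV="(-782053253338)" and E="(31)" and R="(68750000000)" and CDl="(997636718750)" and mm="(-79/32)" and C="0.15" and QQ="(318309859154, 318318318319)" and U="(-756006006008, -716197183096)" and UA="(512938405074, 571545081121)" and UB="(263105807399, 326663779754)" and WW="(183573617511, 237228997252)" and B="(-1126837736947, -826081278799)" and PA="(-623211608543, -621738784171)" and PB="(-53766161170, 53766161170)" and PC="(-782053253369, -780205041516)" and PD="(-42845798088, 42845798088)" and PE="(29507141887, 347583717177)" and PF="(469191550731, 762844097987)"])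
  apply simp
  apply (rule inv_pi)
  apply assumption
  apply assumption
  apply simp
  apply simp
  apply (rule sin_approx, simp add: Psin_def power_divide)
  apply (rule cos_approx, simp add: Pcos_def power_divide)
  by (simp_all add: mulchk_def)

lemma ca_8: "okI 0.15 (real_of_int (-2250000000000) / real_of_int 1000000000000) (real_of_int (-2125000000000) / real_of_int 1000000000000)"
  apply (rule okI_cell, rule cellZ[where S="(1000000000000)" and L="(-2250000000000)" and H="(-2125000000000)" and M="(-2343750000000)" and CC="(150000000000)" and SV="(-715851385007)" and CV="(-698252672459)" and E="(12)" and R="(68750000000)" and CDl="(997636718750)" and mm="(-75/32)" and C="0.15" and QQ="(318309859154, 318318318319)" and U="(-716216216218, -676408450702)" and UA="(457528392181, 512965668374)" and UB="(209332229651, 263133776931)" and WW="(237202440182, 294275445290)" and B="(-1324239503805, -1008110370773)" and PA="(-715851385019, -714159626839)" and PB="(-48004871233, 48004871233)" and PC="(-698252672471, -696602504998)" and PD="(-49214782721, 49214782721)" and PE="(272677985544, 556120736463)" and PF="(671557517666, 1011528629758)"])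
  apply simp
  apply (rule inv_pi)
  apply assumption
  apply assumption
  apply simp
  apply simp
  apply (rule sin_approx, simp add: Psin_def power_divide)
  apply (rule cos_approx, simp add: Pcos_def power_divide)
  by (simp_all add: mulchk_def)

lemma ca_9: "okI 0.15 (real_of_int (-2125000000000) / real_of_int 1000000000000) (real_of_int (-2000000000000) / real_of_int 1000000000000)"
  apply (rule okI_cell, rule cellZ[where S="(1000000000000)" and L="(-2125000000000)" and H="(-2000000000000)" and M="(-2218750000000)" and CC="(150000000000)" and SV="(-797320540061)" and CV="(-603556092174)" and E="(5)" and R="(68750000000)" and CDl="(997636718750)" and mm="(-71/32)" and C="0.15" and QQ="(318309859154, 318318318319)" and U="(-676426426428, -636619718308)" and UA="(405284665738, 457552710371)" and UB="(164255660282, 209354482768)" and WW="(294249062025, 353686328807)" and B="(-1503166897430, -1176996248100)" and PA="(-797320540066, -795436247373)" and PB="(-41494481338, 41494481338)" and PC="(-603556092179, -602129719373)" and PD="(-54815787130, 54815787130)" and PE="(407132113307, 667895912136)" and PF="(887386629909, 1260878973242)"])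
  apply simp
  apply (rule inv_pi)
  apply assumption
  apply assumption
  apply simp
  apply simp
  apply (rule sin_approx, simp add: Psin_def power_divide)
  apply (rule cos_approx, simp add: Pcos_def power_divide)
  by (simp_all add: mulchk_def)

lemma ca_10: "okI 0.15 (real_of_int (-2000000000000) / real_of_int 1000000000000) (real_of_int (-1875000000000) / real_of_int 1000000000000)"
  apply (rule okI_cell, rule cellZ[where S="(1000000000000)" and L="(-2000000000000)" and H="(-1875000000000)" and M="(-2093750000000)" and CC="(150000000000)" and SV="(-866347774757)" and CV="(-499441220940)" and E="(3)" and R="(68750000000)" and CDl="(997636718750)" and mm="(-67/32)" and C="0.15" and QQ="(318309859154, 318318318319)" and U="(-636636636638, -596830985913)" and UA="(356207225745, 405306207110)" and UB="(126883587672, 164273121522)" and WW="(353660707301, 414469136183)" and B="(-1657876544732, -1326227652378)" and PA="(-866347774760, -864300351301)" and PB="(-34336583940, 34336583940)" and PC="(-499441220943, -498260900864)" and PD="(-59561409515, 59561409515)" and PE="(444999773573, 692435705293)" and PF="(1100720898745, 1493223472496)"])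
  apply simp
  apply (rule inv_pi)
  apply assumption
  apply assumption
  apply simp
  apply simp
  apply (rule sin_approx, simp add: Psin_def power_divide)
  apply (rule cos_approx, simp add: Pcos_def power_divide)
  by (simp_all add: mulchk_def)

lemma ca_11: "okI 0.15 (real_of_int (-1875000000000) / real_of_int 1000000000000) (real_of_int (-1750000000000) / real_of_int 1000000000000)"
  apply (rule okI_cell, rule cellZ[where S="(1000000000000)" and L="(-1875000000000)" and H="(-1750000000000)" and M="(-1968750000000)" and CC="(150000000000)" and SV="(-921855942186)" and CV="(-387532736497)" and E="(2)" and R="(68750000000)" and CDl="(997636718750)" and mm="(-63/32)" and C="0.15" and QQ="(318309859154, 318318318319)" and U="(-596846846849, -557042253519)" and UA="(310296072205, 356226158594)" and UB="(96283652425, 126897076067)" and WW="(414444758878, 475691508016)" and B="(-1783843155060, -1450556656073)" and PA="(-921855942188, -919677337320)" and PB="(-26642875635, 26642875635)" and PC="(-387532736499, -386616887645)" and PD="(-63377596026, 63377596026)" and PE="(400369857379, 641328902660)" and PF="(1295397082499, 1691973123757)"])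
  apply simp
  apply (rule inv_pi)
  apply assumption
  apply assumption
  apply simp
  apply simp
  apply (rule sin_approx, simp add: Psin_def power_divide)
  apply (rule cos_approx, simp add: Pcos_def power_divide)
  by (simp_all add: mulchk_def)

lemma ca_12: "okI 0.15 (real_of_int (-1750000000000) / real_of_int 1000000000000) (real_of_int (-1625000000000) / real_of_int 1000000000000)"
  apply (rule okI_cell, rule cellZ[where S="(1000000000000)" and L="(-1750000000000)" and H="(-1625000000000)" and M="(-1843750000000)" and CC="(150000000000)" and SV="(-962978855959)" and CV="(-269576933316)" and E="(2)" and R="(68750000000)" and CDl="(997636718750)" and mm="(-59/32)" and C="0.15" and QQ="(318309859154, 318318318319)" and U="(-557057057059, -517253521125)" and UA="(267551205116, 310312564820)" and UB="(71583647359, 96293887886)" and WW="(475668758245, 536481237128)" and B="(-1877684329948, -1545923464296)" and PA="(-962978855961, -960703066082)" and PB="(-18533414166, 18533414166)" and PC="(-269576933318, -268939847202)" and PD="(-66204796348, 66204796348)" and PE="(288337224163, 527344573776)" and PF="(1456522172244, 1842970209270)"])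
  apply simp
  apply (rule inv_pi)
  apply assumption
  apply assumption
  apply simp
  apply simp
  apply (rule sin_approx, simp add: Psin_def power_divide)
  apply (rule cos_approx, simp add: Pcos_def power_divide)
  by (simp_all add: mulchk_def)

lemma ca_13: "okI 0.15 (real_of_int (-1625000000000) / real_of_int 1000000000000) (real_of_int (-1500000000000) / real_of_int 1000000000000)"
  apply (rule okI_cell, rule cellZ[where S="(1000000000000)" and L="(-1625000000000)" and H="(-1500000000000)" and M="(-1718750000000)" and CC="(150000000000)" and SV="(-989074806762)" and CV="(-147414472252)" and E="(2)" and R="(68750000000)" and CDl="(997636718750)" and mm="(-55/32)" and C="0.15" and QQ="(318309859154, 318318318319)" and U="(-517267267269, -477464788731)" and UA="(227972624477, 267565425788)" and UB="(51971517510, 71591257078)" and WW="(536460405501, 596026268557)" and B="(-1937085372811, -1609381216503)" and PA="(-989074806764, -986737344814)" and PB="(-10134744968, 10134744968)" and PC="(-147414472254, -147066090391)" and PD="(-67998892966, 67998892966)" and PE="(124171274506, 363654573546)" and PF="(1571725880180, 1935554207034)"])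
  apply simp
  apply (rule inv_pi)
  apply assumption
  apply assumption
  apply simp
  apply simp
  apply (rule sin_approx, simp add: Psin_def power_divide)
  apply (rule cos_approx, simp add: Pcos_def power_divide)
  by (simp_all add: mulchk_def)

lemma ca_14: "okI 0.15 (real_of_int (-1500000000000) / real_of_int 1000000000000) (real_of_int (-1375000000000) / real_of_int 1000000000000)"
  apply (rule okI_cell, rule cellZ[where S="(1000000000000)" and L="(-1500000000000)" and H="(-1375000000000)" and M="(-1593750000000)" and CC="(150000000000)" and SV="(-999736576009)" and CV="(-22951657654)" and E="(2)" and R="(68750000000)" and CDl="(997636718750)" and mm="(-51/32)" and C="0.15" and QQ="(318309859154, 318318318319)" and U="(-477477477479, -437676056336)" and UA="(191560330289, 227984741500)" and UB="(36695360140, 51977042357)" and WW="(596007559356, 653574699563)" and B="(-1960724098689, -1639020788229)" and PA="(-999736576011, -997373917301)" and PB="(-1577926464, 1577926464)" and PC="(-22951657656, -22897416429)" and PD="(-68731889601, 68731889601)" and PE="(-81577471345, 163180929801)" and PF="(1632130329816, 1963301475370)"])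
  apply simp
  apply (rule inv_pi)
  apply assumption
  apply assumption
  apply simp
  apply simp
  apply (rule sin_approx, simp add: Psin_def power_divide)
  apply (rule cos_approx, simp add: Pcos_def power_divide)
  by (simp_all add: mulchk_def)

lemma ca_15: "okI 0.15 (real_of_int (-1375000000000) / real_of_int 1000000000000) (real_of_int (-1250000000000) / real_of_int 1000000000000)"
  apply (rule okI_cell, rule cellZ[where S="(1000000000000)" and L="(-1375000000000)" and H="(-1250000000000)" and M="(-1468750000000)" and CC="(150000000000)" and SV="(-994797790359)" and CV="(101869309886)" and E="(2)" and R="(68750000000)" and CDl="(997636718750)" and mm="(-47/32)" and C="0.15" and QQ="(318309859154, 318318318319)" and U="(-437687687689, -397887323942)" and UA="(158314322553, 191570511955)" and UB="(25063424725, 36699261051)" and WW="(653558237140, 708434779620)" and B="(-1948195643955, -1633895592850)" and PA="(-994797790361, -992446803391)" and PB="(-7003515055, 7003515055)" and PC="(101628564054, 101869309888)" and PD="(-68392348088, 68392348088)" and PE="(-314919274463, -59153964535)" and PF="(1610111445815, 1951704939320)"])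
  apply simp
  apply (rule inv_pi)
  apply assumption
  apply assumption
  apply simp
  apply simp
  apply (rule sin_approx, simp add: Psin_def power_divide)
  apply (rule cos_approx, simp add: Pcos_def power_divide)
  by (simp_all add: mulchk_def)

lemma ca_16: "okI 0.15 (real_of_int (-1250000000000) / real_of_int 1000000000000) (real_of_int (-1125000000000) / real_of_int 1000000000000)"
  apply (rule okI_cell, rule cellZ[where S="(1000000000000)" and L="(-1250000000000)" and H="(-1125000000000)" and M="(-1343750000000)" and CC="(150000000000)" and SV="(-974335517909)" and CV="(225100640917)" and E="(2)" and R="(68750000000)" and CDl="(997636718750)" and mm="(-43/32)" and C="0.15" and QQ="(318309859154, 318318318319)" and U="(-397897897899, -358098591548)" and UA="(128234601268, 158322737153)" and UB="(16444112962, 25066089100)" and WW="(708420614793, 759974910427)" and B="(-1899937276068, -1593946383284)" and PA="(-974335517911, -972032889046)" and PB="(-15475669064, 15475669064)" and PC="(224568664790, 225100640919)" and PD="(-66985566857, 66985566857)" and PE="(-555353823981, -291466244025)" and PF="(1524700921194, 1880579170403)"])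
  apply simp
  apply (rule inv_pi)
  apply assumption
  apply assumption
  apply simp
  apply simp
  apply (rule sin_approx, simp add: Psin_def power_divide)
  apply (rule cos_approx, simp add: Pcos_def power_divide)
  by (simp_all add: mulchk_def)

lemma ca_17: "okI 0.15 (real_of_int (-1125000000000) / real_of_int 1000000000000) (real_of_int (-1000000000000) / real_of_int 1000000000000)"
  apply (rule okI_cell, rule cellZ[where S="(1000000000000)" and L="(-1125000000000)" and H="(-1000000000000)" and M="(-1218750000000)" and CC="(150000000000)" and SV="(-938669065577)" and CV="(344819351733)" and E="(2)" and R="(68750000000)" and CDl="(997636718750)" and mm="(-39/32)" and C="0.15" and QQ="(318309859154, 318318318319)" and U="(-358108108109, -318309859154)" and UA="(101321166434, 128241417094)" and UB="(10265978767, 16445861059)" and WW="(759963026870, 807623645900)" and B="(-1817153203275, -1519926053740)" and PA="(-938669065579, -936450726572)" and PB="(-23706330432, 23706330432)" and PC="(344004446622, 344819351735)" and PD="(-64533498259, 64533498259)" and PE="(-793491253991, -531365054405)" and PF="(1387303988098, 1748783533615)"])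
  apply simp
  apply (rule inv_pi)
  apply assumption
  apply assumption
  apply simp
  apply simp
  apply (rule sin_approx, simp add: Psin_def power_divide)
  apply (rule cos_approx, simp add: Pcos_def power_divide)
  by (simp_all add: mulchk_def)

lemma ca_18: "okI 0.15 (real_of_int (-1000000000000) / real_of_int 1000000000000) (real_of_int (-875000000000) / real_of_int 1000000000000)"
  apply (rule okI_cell, rule cellZ[where S="(1000000000000)" and L="(-1000000000000)" and H="(-875000000000)" and M="(-1093750000000)" and CC="(150000000000)" and SV="(-888354996422)" and CV="(459157271892)" and E="(2)" and R="(68750000000)" and CDl="(997636718750)" and mm="(-35/32)" and C="0.15" and QQ="(318309859154, 318318318319)" and U="(-318318318319, -278521126759)" and UA="(77574018051, 101326551778)" and UB="(6017728276, 10267070096)" and WW="(807613966539, 850869692175)" and B="(-1701739384350, -1413324441443)" and PA="(-888354996424, -886255563713)" and PB="(-31567062443, 31567062443)" and PC="(458072154118, 459157271894)" and PD="(-61074406005, 61074406005)" and PE="(-1021679678530, -769539473979)" and PF="(1207952148665, 1565467598107)"])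
  apply simp
  apply (rule inv_pi)
  apply assumption
  apply assumption
  apply simp
  apply simp
  apply (rule sin_approx, simp add: Psin_def power_divide)
  apply (rule cos_approx, simp add: Pcos_def power_divide)
  by (simp_all add: mulchk_def)

lemma ca_19: "okI 0.15 (real_of_int (-875000000000) / real_of_int 1000000000000) (real_of_int (-750000000000) / real_of_int 1000000000000)"
  apply (rule okI_cell, rule cellZ[where S="(1000000000000)" and L="(-875000000000)" and H="(-750000000000)" and M="(-968750000000)" and CC="(150000000000)" and SV="(-824178444667)" and CV="(566330196393)" and E="(2)" and R="(68750000000)" and CDl="(997636718750)" and mm="(-31/32)" and C="0.15" and QQ="(318309859154, 318318318319)" and U="(-278528528530, -238732394365)" and UA="(56993156119, 77578141206)" and UB="(3248219844, 6018367993)" and WW="(850862085580, 889261907607)" and B="(-1556208338313, -1276293128370)" and PA="(-824178444669, -822230679200)" and PB="(-38935201003, 38935201003)" and PC="(564991798856, 566330196395)" and PD="(-56662268071, 56662268071)" and PE="(-1233843230018, -998303176502)" and PF="(999714636306, 1343184652307)"])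
  apply simp
  apply (rule inv_pi)
  apply assumption
  apply assumption
  apply simp
  apply simp
  apply (rule sin_approx, simp add: Psin_def power_divide)
  apply (rule cos_approx, simp add: Pcos_def power_divide)
  by (simp_all add: mulchk_def)

lemma ca_20: "okI 0.15 (real_of_int (-750000000000) / real_of_int 1000000000000) (real_of_int (-625000000000) / real_of_int 1000000000000)"
  apply (rule okI_cell, rule cellZ[where S="(1000000000000)" and L="(-750000000000)" and H="(-625000000000)" and M="(-843750000000)" and CC="(150000000000)" and SV="(-747140863936)" and CV="(664665727594)" and E="(2)" and R="(68750000000)" and CDl="(997636718750)" and mm="(-27/32)" and C="0.15" and QQ="(318309859154, 318318318319)" and U="(-238738738740, -198943661971)" and UA="(39578580638, 56996185376)" and UB="(1566464045, 3248565148)" and WW="(889256194395, 922409302770)" and B="(-1383613954155, -1111570242993)" and PA="(-747140863938, -745375159939)" and PB="(-45695768773, 45695768773)" and PC="(663094935540, 664665727596)" and PD="(-51365934396, 51365934396)" and PE="(-1425333496863, -1211534553209)" and PF="(777742790855, 1096979828385)"])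
  apply simp
  apply (rule inv_pi)
  apply assumption
  apply assumption
  apply simp
  apply simp
  apply (rule sin_approx, simp add: Psin_def power_divide)
  apply (rule cos_approx, simp add: Pcos_def power_divide)
  by (simp_all add: mulchk_def)

lemma ca_21: "okI 0.15 (real_of_int (-625000000000) / real_of_int 1000000000000) (real_of_int (-500000000000) / real_of_int 1000000000000)"
  apply (rule okI_cell, rule cellZ[where S="(1000000000000)" and L="(-625000000000)" and H="(-500000000000)" and M="(-718750000000)" and CC="(150000000000)" and SV="(-658444399911)" and CV="(752629372418)" and E="(2)" and R="(68750000000)" and CDl="(997636718750)" and mm="(-23/32)" and C="0.15" and QQ="(318309859154, 318318318319)" and U="(-198948948950, -159154929577)" and UA="(25330291608, 39580684289)" and UB="(641623672, 1566630569)" and WW="(922405261990, 949981040457)" and B="(-1187476300572, -922405261990)" and PA="(-658444399913, -656888310604)" and PB="(-51743269354, 51743269354)" and PC="(750850697531, 752629372420)" and PD="(-45268052495, 45268052495)" and PE="(-1592723150577, -1404532966027)" and PF="(558188970316, 843331026214)"])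
  apply simp
  apply (rule inv_pi)
  apply assumption
  apply assumption
  apply simp
  apply simp
  apply (rule sin_approx, simp add: Psin_def power_divide)
  apply (rule cos_approx, simp add: Pcos_def power_divide)
  by (simp_all add: mulchk_def)

lemma ca_22: "okI 0.15 (real_of_int (-500000000000) / real_of_int 1000000000000) (real_of_int (-375000000000) / real_of_int 1000000000000)"
  apply (rule okI_cell, rule cellZ[where S="(1000000000000)" and L="(-500000000000)" and H="(-375000000000)" and M="(-593750000000)" and CC="(150000000000)" and SV="(-559473131247)" and CV="(828848487609)" and E="(2)" and R="(68750000000)" and CDl="(997636718750)" and mm="(-19/32)" and C="0.15" and QQ="(318309859154, 318318318319)" and U="(-159159159160, -119366197182)" and UA="(14248289029, 25331637945)" and UB="(203013740, 641691881)" and WW="(949978415990, 971706435683)" and B="(-971706435683, -712483811992)" and PA="(-559473131249, -558150938884)" and PB="(-56983333524, 56983333524)" and PC="(826889685517, 828848487611)" and PD="(-38463777774, 38463777774)" and PE="(-1733568072930, -1573816256463)" and PF="(357073805913, 599014714139)"])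
  apply simp
  apply (rule inv_pi)
  apply assumption
  apply assumption
  apply simp
  apply simp
  apply (rule sin_approx, simp add: Psin_def power_divide)
  apply (rule cos_approx, simp add: Pcos_def power_divide)
  by (simp_all add: mulchk_def)

lemma ca_23: "okI 0.15 (real_of_int (-375000000000) / real_of_int 1000000000000) (real_of_int (-250000000000) / real_of_int 1000000000000)"
  apply (rule okI_cell, rule cellZ[where S="(1000000000000)" and L="(-375000000000)" and H="(-250000000000)" and M="(-468750000000)" and CC="(150000000000)" and SV="(-451771471492)" and CV="(892133699367)" and E="(2)" and R="(68750000000)" and CDl="(997636718750)" and mm="(-15/32)" and C="0.15" and QQ="(318309859154, 318318318319)" and U="(-119369369370, -79577464788)" and UA="(6332572902, 14249046344)" and UB="(40101479, 203035322)" and WW="(971704942633, 987374955676)" and B="(-740531216757, -485852471316)" and PA="(-451771471494, -450703808442)" and PB="(-61334191832, 61334191832)" and PC="(890025336520, 892133699369)" and PD="(-31059288666, 31059288666)" and PE="(-1846163847645, -1716885693019)" and PF="(189176190485, 379970761188)"])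
  apply simp
  apply (rule inv_pi)
  apply assumption
  apply assumption
  apply simp
  apply simp
  apply (rule sin_approx, simp add: Psin_def power_divide)
  apply (rule cos_approx, simp add: Pcos_def power_divide)
  by (simp_all add: mulchk_def)

lemma ca_24: "okI 0.15 (real_of_int (-250000000000) / real_of_int 1000000000000) (real_of_int (-125000000000) / real_of_int 1000000000000)"
  apply (rule okI_cell, rule cellZ[where S="(1000000000000)" and L="(-250000000000)" and H="(-125000000000)" and M="(-343750000000)" and CC="(150000000000)" and SV="(-337020069022)" and CV="(941497463128)" and E="(2)" and R="(68750000000)" and CDl="(997636718750)" and mm="(-11/32)" and C="0.15" and QQ="(318309859154, 318318318319)" and U="(-79579579580, -39788732394)" and UA="(1583143225, 6332909487)" and UB="(2506342, 40105743)" and WW="(987374286768, 996836219893)" and B="(-498418109947, -246843571692)" and PA="(-337020069024, -336223595810)" and PB="(-64727950591, 64727950591)" and PC="(939272439824, 941497463130)" and PD="(-23170129746, 23170129746)" and PE="(-1929320679031, -1831984174373)" and PF="(67016954764, 200238488612)"])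
  apply simp
  apply (rule inv_pi)
  apply assumption
  apply assumption
  apply simp
  apply simp
  apply (rule sin_approx, simp add: Psin_def power_divide)
  apply (rule cos_approx, simp add: Pcos_def power_divide)
  by (simp_all add: mulchk_def)

lemma ca_25: "okI 0.15 (real_of_int (-125000000000) / real_of_int 1000000000000) (real_of_int (0) / real_of_int 1000000000000)"
  apply (rule okI_cell, rule cellZ[where S="(1000000000000)" and L="(-125000000000)" and H="(0)" and M="(-218750000000)" and CC="(150000000000)" and SV="(-217009581095)" and CV="(976169473869)" and E="(2)" and R="(68750000000)" and CDl="(997636718750)" and mm="(-7/32)" and C="0.15" and QQ="(318309859154, 318318318319)" and U="(-39789789790, 0)" and UA="(0, 1583227372)" and UB="(0, 2506609)" and WW="(996836051864, 1000000000000)" and B="(-250000000000, 0)" and PA="(-217009581097, -216496726418)" and PB="(-67111651329, 67111651329)" and PC="(973862510852, 976169473871)" and PD="(-14919408701, 14919408701)" and PE="(-1982177765144, -1917871782129)" and PF="(0, 71030308107)"])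
  apply simp
  apply (rule inv_pi)
  apply assumption
  apply assumption
  apply simp
  apply simp
  apply (rule sin_approx, simp add: Psin_def power_divide)
  apply (rule cos_approx, simp add: Pcos_def power_divide)
  by (simp_all add: mulchk_def)

lemma ca_26: "okI 0.15 (real_of_int (0) / real_of_int 1000000000000) (real_of_int (125000000000) / real_of_int 1000000000000)"
  apply (rule okI_cell, rule cellZ[where S="(1000000000000)" and L="(0)" and H="(125000000000)" and M="(-93750000000)" and CC="(150000000000)" and SV="(-93612731236)" and CV="(995608686458)" and E="(2)" and R="(68750000000)" and CDl="(997636718750)" and mm="(-3/32)" and C="0.15" and QQ="(318309859154, 318318318319)" and U="(0, 39789789790)" and UA="(0, 1583227372)" and UB="(0, 2506609)" and WW="(996836051864, 1000000000000)" and B="(0, 250000000000)" and PA="(-93612731238, -93391498021)" and PB="(-68448097195, 68448097195)" and PC="(993255783114, 995608686460)" and PD="(-6435875273, 6435875273)" and PE="(-2004089123466, -1973624974252)" and PF="(-40515207109, 0)"])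
  apply simp
  apply (rule inv_pi)
  apply assumption
  apply assumption
  apply simp
  apply simp
  apply (rule sin_approx, simp add: Psin_def power_divide)
  apply (rule cos_approx, simp add: Pcos_def power_divide)
  by (simp_all add: mulchk_def)

lemma ca_27: "okI 0.15 (real_of_int (125000000000) / real_of_int 1000000000000) (real_of_int (250000000000) / real_of_int 1000000000000)"
  apply (rule okI_cell, rule cellZ[where S="(1000000000000)" and L="(125000000000)" and H="(250000000000)" and M="(31250000000)" and CC="(150000000000)" and SV="(31244913985)" and CV="(999511758485)" and E="(2)" and R="(68750000000)" and CDl="(997636718750)" and mm="(1/32)" and C="0.15" and QQ="(318309859154, 318318318319)" and U="(39788732394, 79579579580)" and UA="(1583143225, 6332909487)" and UB="(2506342, 40105743)" and WW="(987374286768, 996836219893)" and B="(246843571692, 498418109947)" and PA="(31171073463, 31244913987)" and PB="(-68716433396, 68716433396)" and PC="(997149631085, 999511758487)" and PD="(-2148087837, 2148087837)" and PE="(-2003304629636, -1989763654838)" and PF="(-18713287336, 49822545831)"])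
  apply simp
  apply (rule inv_pi)
  apply assumption
  apply assumption
  apply simp
  apply simp
  apply (rule sin_approx, simp add: Psin_def power_divide)
  apply (rule cos_approx, simp add: Pcos_def power_divide)
  by (simp_all add: mulchk_def)

lemma ca_28: "okI 0.15 (real_of_int (250000000000) / real_of_int 1000000000000) (real_of_int (375000000000) / real_of_int 1000000000000)"
  apply (rule okI_cell, rule cellZ[where S="(1000000000000)" and L="(250000000000)" and H="(375000000000)" and M="(156250000000)" and CC="(150000000000)" and SV="(155614992774)" and CV="(987817783816)" and E="(2)" and R="(68750000000)" and CDl="(997636718750)" and mm="(5/32)" and C="0.15" and QQ="(318309859154, 318318318319)" and U="(79577464788, 119369369370)" and UA="(6332572902, 14249046344)" and UB="(40101479, 203035322)" and WW="(971704942633, 987374955676)" and B="(485852471316, 740531216757)" and PA="(155247230777, 155614992776)" and PB="(-67912472638, 67912472638)" and PC="(985483292567, 987817783818)" and PD="(-10698530754, 10698530754)" and PE="(-1996792377258, -1948382029198)" and PF="(42431808073, 165529065942)"])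
  apply simp
  apply (rule inv_pi)
  apply assumption
  apply assumption
  apply simp
  apply simp
  apply (rule sin_approx, simp add: Psin_def power_divide)
  apply (rule cos_approx, simp add: Pcos_def power_divide)
  by (simp_all add: mulchk_def)

lemma ca_29: "okI 0.15 (real_of_int (375000000000) / real_of_int 1000000000000) (real_of_int (500000000000) / real_of_int 1000000000000)"
  apply (rule okI_cell, rule cellZ[where S="(1000000000000)" and L="(375000000000)" and H="(500000000000)" and M="(281250000000)" and CC="(150000000000)" and SV="(277556751646)" and CV="(960709243016)" and E="(2)" and R="(68750000000)" and CDl="(997636718750)" and mm="(9/32)" and C="0.15" and QQ="(318309859154, 318318318319)" and U="(119366197182, 159159159160)" and UA="(14248289029, 25331637945)" and UB="(203013740, 641691881)" and WW="(949978415990, 971706435683)" and B="(712483811992, 971706435683)" and PA="(276900806977, 277556751648)" and PB="(-66048760458, 66048760458)" and PC="(958438816873, 960709243018)" and PD="(-19082026676, 19082026676)" and PE="(-1958389072848, -1875096914640)" and PF="(150228669870, 333883687450)"])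
  apply simp
  apply (rule inv_pi)
  apply assumption
  apply assumption
  apply simp
  apply simp
  apply (rule sin_approx, simp add: Psin_def power_divide)
  apply (rule cos_approx, simp add: Pcos_def power_divide)
  by (simp_all add: mulchk_def)

lemma ca_30: "okI 0.15 (real_of_int (500000000000) / real_of_int 1000000000000) (real_of_int (625000000000) / real_of_int 1000000000000)"
  apply (rule okI_cell, rule cellZ[where S="(1000000000000)" and L="(500000000000)" and H="(625000000000)" and M="(406250000000)" and CC="(150000000000)" and SV="(395167330241)" and CV="(918609155795)" and E="(2)" and R="(68750000000)" and CDl="(997636718750)" and mm="(13/32)" and C="0.15" and QQ="(318309859154, 318318318319)" and U="(159154929577, 198948948950)" and UA="(25330291608, 39580684289)" and UB="(641623672, 1566630569)" and WW="(922405261990, 949981040457)" and B="(922405261990, 1187476300572)" and PA="(394233438696, 395167330243)" and PB="(-63154379462, 63154379462)" and PC="(916438223999, 918609155797)" and PD="(-27167753955, 27167753955)" and PE="(-1887912822382, -1770181990273)" and PF="(305389066372, 544246168313)"])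
  apply simp
  apply (rule inv_pi)
  apply assumption
  apply assumption
  apply simp
  apply simp
  apply (rule sin_approx, simp add: Psin_def power_divide)
  apply (rule cos_approx, simp add: Pcos_def power_divide)
  by (simp_all add: mulchk_def)

lemma ca_31: "okI 0.15 (real_of_int (625000000000) / real_of_int 1000000000000) (real_of_int (750000000000) / real_of_int 1000000000000)"
  apply (rule okI_cell, rule cellZ[where S="(1000000000000)" and L="(625000000000)" and H="(750000000000)" and M="(531250000000)" and CC="(150000000000)" and SV="(506611454814)" and CV="(862174479935)" and E="(2)" and R="(68750000000)" and CDl="(997636718750)" and mm="(17/32)" and C="0.15" and QQ="(318309859154, 318318318319)" and U="(198943661971, 238738738740)" and UA="(39578580638, 56996185376)" and UB="(1566464045, 3248565148)" and WW="(889256194395, 922409302770)" and B="(1111570242993, 1383613954155)" and PA="(505414189459, 506611454816)" and PB="(-59274495496, 59274495496)" and PC="(860136919150, 862174479937)" and PD="(-34829537519, 34829537519)" and PE="(-1785577287663, -1634528374483)" and PF="(495915608027, 782967697312)"])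
  apply simp
  apply (rule inv_pi)
  apply assumption
  apply assumption
  apply simp
  apply simp
  apply (rule sin_approx, simp add: Psin_def power_divide)
  apply (rule cos_approx, simp add: Pcos_def power_divide)
  by (simp_all add: mulchk_def)

lemma ca_32: "okI 0.15 (real_of_int (750000000000) / real_of_int 1000000000000) (real_of_int (875000000000) / real_of_int 1000000000000)"
  apply (rule okI_cell, rule cellZ[where S="(1000000000000)" and L="(750000000000)" and H="(875000000000)" and M="(656250000000)" and CC="(150000000000)" and SV="(610150077076)" and CV="(792285859677)" and E="(2)" and R="(68750000000)" and CDl="(997636718750)" and mm="(21/32)" and C="0.15" and QQ="(318309859154, 318318318319)" and U="(238732394365, 278528528530)" and UA="(56993156119, 77578141206)" and UB="(3248219844, 6018367993)" and WW="(850862085580, 889261907607)" and B="(1276293128370, 1556208338313)" and PA="(608708120837, 610150077078)" and PB="(-54469652853, 54469652853)" and PC="(790413465358, 792285859679)" and PD="(-41947817800, 41947817800)" and PE="(-1652208708644, -1469904044933)" and PF="(707370748166, 1034286765526)"])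
  apply simp
  apply (rule inv_pi)
  apply assumption
  apply assumption
  apply simp
  apply simp
  apply (rule sin_approx, simp add: Psin_def power_divide)
  apply (rule cos_approx, simp add: Pcos_def power_divide)
  by (simp_all add: mulchk_def)

lemma ca_33: "okI 0.15 (real_of_int (875000000000) / real_of_int 1000000000000) (real_of_int (1000000000000) / real_of_int 1000000000000)"
  apply (rule okI_cell, rule cellZ[where S="(1000000000000)" and L="(875000000000)" and H="(1000000000000)" and M="(781250000000)" and CC="(150000000000)" and SV="(704167511455)" and CV="(710033883566)" and E="(2)" and R="(68750000000)" and CDl="(997636718750)" and mm="(25/32)" and C="0.15" and QQ="(318309859154, 318318318319)" and U="(278521126759, 318318318319)" and UA="(77574018051, 101326551778)" and UB="(6017728276, 10267070096)" and WW="(807613966539, 850869692175)" and B="(1413324441443, 1701739384350)" and PA="(702503365576, 704167511457)" and PB="(-48814829496, 48814829496)" and PC="(708355873800, 710033883568)" and PD="(-48411516413, 48411516413)" and PE="(-1489506089987, -1279234544913)" and PF="(923873985132, 1281379705320)"])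
  apply simp
  apply (rule inv_pi)
  apply assumption
  apply assumption
  apply simp
  apply simp
  apply (rule sin_approx, simp add: Psin_def power_divide)
  apply (rule cos_approx, simp add: Pcos_def power_divide)
  by (simp_all add: mulchk_def)

lemma ca_34: "okI 0.15 (real_of_int (1000000000000) / real_of_int 1000000000000) (real_of_int (1125000000000) / real_of_int 1000000000000)"
  apply (rule okI_cell, rule cellZ[where S="(1000000000000)" and L="(1000000000000)" and H="(1125000000000)" and M="(906250000000)" and CC="(150000000000)" and SV="(787196647332)" and CV="(616702066179)" and E="(2)" and R="(68750000000)" and CDl="(997636718750)" and mm="(29/32)" and C="0.15" and QQ="(318309859154, 318318318319)" and U="(318309859154, 358108108109)" and UA="(101321166434, 128241417094)" and UB="(10265978767, 16445861059)" and WW="(759963026870, 807623645900)" and B="(1519926053740, 1817153203275)" and PA="(785336280253, 787196647334)" and PB="(-42398267050, 42398267050)" and PC="(615244625747, 616702066181)" and PD="(-54119769505, 54119769505)" and PE="(-1300323815043, -1066880623948)" and PF="(1129210842581, 1507501056094)"])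
  apply simp
  apply (rule inv_pi)
  apply assumption
  apply assumption
  apply simp
  apply simp
  apply (rule sin_approx, simp add: Psin_def power_divide)
  apply (rule cos_approx, simp add: Pcos_def power_divide)
  by (simp_all add: mulchk_def)

lemma ca_35: "okI 0.15 (real_of_int (1125000000000) / real_of_int 1000000000000) (real_of_int (1250000000000) / real_of_int 1000000000000)"
  apply (rule okI_cell, rule cellZ[where S="(1000000000000)" and L="(1125000000000)" and H="(1250000000000)" and M="(1031250000000)" and CC="(150000000000)" and SV="(857941842812)" and CV="(513746819310)" and E="(2)" and R="(68750000000)" and CDl="(997636718750)" and mm="(33/32)" and C="0.15" and QQ="(318309859154, 318318318319)" and U="(358098591548, 397897897899)" and UA="(128234601268, 158322737153)" and UB="(16444112962, 25066089100)" and WW="(708420614793, 759974910427)" and B="(1593946383284, 1899937276068)" and PA="(855914284939, 857941842814)" and PB="(-35320093828, 35320093828)" and PC="(512532691082, 513746819312)" and PD="(-58983501694, 58983501694)" and PE="(-1088952389440, -838886152421)" and PF="(1307983143065, 1697141650719)"])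
  apply simp
  apply (rule inv_pi)
  apply assumption
  apply assumption
  apply simp
  apply simp
  apply (rule sin_approx, simp add: Psin_def power_divide)
  apply (rule cos_approx, simp add: Pcos_def power_divide)
  by (simp_all add: mulchk_def)

lemma ca_36: "okI 0.15 (real_of_int (1250000000000) / real_of_int 1000000000000) (real_of_int (1375000000000) / real_of_int 1000000000000)"
  apply (rule okI_cell, rule cellZ[where S="(1000000000000)" and L="(1250000000000)" and H="(1375000000000)" and M="(1156250000000)" and CC="(150000000000)" and SV="(915299142782)" and CV="(402774725154)" and E="(2)" and R="(68750000000)" and CDl="(997636718750)" and mm="(37/32)" and C="0.15" and QQ="(318309859154, 318318318319)" and U="(397887323942, 437687687689)" and UA="(158314322553, 191570511955)" and UB="(25063424725, 36699261051)" and WW="(653558237140, 708434779620)" and B="(1633895592850, 1948195643955)" and PA="(913136033477, 915299142784)" and PB="(-27690762355, 27690762355)" and PC="(401822855196, 402774725156)" and PD="(-62926816067, 62926816067)" and PE="(-861370629310, -603168673003)" and PF="(1446725126196, 1837128825486)"])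
  apply simp
  apply (rule inv_pi)
  apply assumption
  apply assumption
  apply simp
  apply simp
  apply (rule sin_approx, simp add: Psin_def power_divide)
  apply (rule cos_approx, simp add: Pcos_def power_divide)
  by (simp_all add: mulchk_def)

lemma ca_37: "okI 0.15 (real_of_int (1375000000000) / real_of_int 1000000000000) (real_of_int (1500000000000) / real_of_int 1000000000000)"
  apply (rule okI_cell, rule cellZ[where S="(1000000000000)" and L="(1375000000000)" and H="(1500000000000)" and M="(1281250000000)" and CC="(150000000000)" and SV="(958373505758)" and CV="(285517466122)" and E="(2)" and R="(68750000000)" and CDl="(997636718750)" and mm="(41/32)" and C="0.15" and QQ="(318309859154, 318318318319)" and U="(437676056336, 477477477479)" and UA="(191560330289, 227984741500)" and UB="(36695360140, 51977042357)" and WW="(596007559356, 653574699563)" and B="(1639020788229, 1960724098689)" and PA="(956108599619, 958373505760)" and PB="(-19629325797, 19629325797)" and PC="(284842708045, 285517466124)" and PD="(-65888178521, 65888178521)" and PE="(-625441549178, -369625405916)" and PF="(1534908997539, 1917593720420)"])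
  apply simp
  apply (rule inv_pi)
  apply assumption
  apply assumption
  apply simp
  apply simp
  apply (rule sin_approx, simp add: Psin_def power_divide)
  apply (rule cos_approx, simp add: Pcos_def power_divide)
  by (simp_all add: mulchk_def)

lemma ca_38: "okI 0.15 (real_of_int (1500000000000) / real_of_int 1000000000000) (real_of_int (1625000000000) / real_of_int 1000000000000)"
  apply (rule okI_cell, rule cellZ[where S="(1000000000000)" and L="(1500000000000)" and H="(1625000000000)" and M="(1406250000000)" and CC="(150000000000)" and SV="(986492770713)" and CV="(163804802526)" and E="(2)" and R="(68750000000)" and CDl="(997636718750)" and mm="(45/32)" and C="0.15" and QQ="(318309859154, 318318318319)" and U="(477464788731, 517267267269)" and UA="(227972624477, 267565425788)" and UB="(51971517510, 71591257078)" and WW="(536460405501, 596026268557)" and B="(1609381216503, 1937085372811)" and PA="(984161410842, 986492770715)" and PB="(-11261580174, 11261580174)" and PC="(163417685705, 163804802528)" and PD="(-67821377987, 67821377987)" and PE="(-391024576452, -150129456386)" and PF="(1565766713016, 1932735358766)"])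
  apply simp
  apply (rule inv_pi)
  apply assumption
  apply assumption
  apply simp
  apply simp
  apply (rule sin_approx, simp add: Psin_def power_divide)
  apply (rule cos_approx, simp add: Pcos_def power_divide)
  by (simp_all add: mulchk_def)

lemma ca_39: "okI 0.15 (real_of_int (1625000000000) / real_of_int 1000000000000) (real_of_int (1750000000000) / real_of_int 1000000000000)"
  apply (rule okI_cell, rule cellZ[where S="(1000000000000)" and L="(1625000000000)" and H="(1750000000000)" and M="(1531250000000)" and CC="(150000000000)" and SV="(999218145922)" and CV="(39536019772)" and E="(2)" and R="(68750000000)" and CDl="(997636718750)" and mm="(49/32)" and C="0.15" and QQ="(318309859154, 318318318319)" and U="(517253521125, 557057057059)" and UA="(267551205116, 310312564820)" and UB="(71583647359, 96293887886)" and WW="(475668758245, 536481237128)" and B="(1545923464296, 1877684329948)" and PA="(996856712411, 999218145924)" and PB="(-2718101360, 2718101360)" and PC="(39442585035, 39536019774)" and PD="(-68696247533, 68696247533)" and PE="(-169978571880, 45942821835)" and PF="(1536862205586, 1881319991133)"])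
  apply simp
  apply (rule inv_pi)
  apply assumption
  apply assumption
  apply simp
  apply simp
  apply (rule sin_approx, simp add: Psin_def power_divide)
  apply (rule cos_approx, simp add: Pcos_def power_divide)
  by (simp_all add: mulchk_def)

lemma ca_40: "okI 0.15 (real_of_int (1750000000000) / real_of_int 1000000000000) (real_of_int (1875000000000) / real_of_int 1000000000000)"
  apply (rule okI_cell, rule cellZ[where S="(1000000000000)" and L="(1750000000000)" and H="(1875000000000)" and M="(1656250000000)" and CC="(150000000000)" and SV="(996351056162)" and CV="(-85349709347)" and E="(2)" and R="(68750000000)" and CDl="(997636718750)" and mm="(53/32)" and C="0.15" and QQ="(318309859154, 318318318319)" and U="(557042253519, 596846846849)" and UA="(310296072205, 356226158594)" and UB="(96283652425, 126897076067)" and WW="(414444758878, 475691508016)" and B="(1450556656073, 1783843155060)" and PA="(993996398390, 996351056164)" and PB="(-5867792518, 5867792518)" and PC="(-85349709349, -85148003977)" and PD="(-68499135112, 68499135112)" and PE="(20621581057, 218818916926)" and PF="(1433336526303, 1787801233094)"])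
  apply simp
  apply (rule inv_pi)
  apply assumption
  apply assumption
  apply simp
  apply simp
  apply (rule sin_approx, simp add: Psin_def power_divide)
  apply (rule cos_approx, simp add: Pcos_def power_divide)
  by (simp_all add: mulchk_def)

lemma ca_41: "okI 0.15 (real_of_int (1875000000000) / real_of_int 1000000000000) (real_of_int (2000000000000) / real_of_int 1000000000000)"
  apply (rule okI_cell, rule cellZ[where S="(1000000000000)" and L="(1875000000000)" and H="(2000000000000)" and M="(1781250000000)" and CC="(150000000000)" and SV="(977936241408)" and CV="(-208903584798)" and E="(2)" and R="(68750000000)" and CDl="(997636718750)" and mm="(57/32)" and C="0.15" and QQ="(318309859154, 318318318319)" and U="(596830985913, 636636636638)" and UA="(356207225745, 405306207110)" and UB="(126883587672, 164273121522)" and WW="(353660707301, 414469136183)" and B="(1326227652378, 1657876544732)" and PA="(975625103022, 977936241410)" and PB="(-14362121455, 14362121455)" and PC="(-208903584800, -208409886870)" and PD="(-67233116597, 67233116597)" and PE="(143204248111, 342050110628)" and PF="(1274853547361, 1645108181170)"])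
  apply simp
  apply (rule inv_pi)
  apply assumption
  apply assumption
  apply simp
  apply simp
  apply (rule sin_approx, simp add: Psin_def power_divide)
  apply (rule cos_approx, simp add: Pcos_def power_divide)
  by (simp_all add: mulchk_def)

lemma ca_42: "okI 0.15 (real_of_int (2000000000000) / real_of_int 1000000000000) (real_of_int (2125000000000) / real_of_int 1000000000000)"
  apply (rule okI_cell, rule cellZ[where S="(1000000000000)" and L="(2000000000000)" and H="(2125000000000)" and M="(1906250000000)" and CC="(150000000000)" and SV="(944261058686)" and CV="(-329197589678)" and E="(2)" and R="(68750000000)" and CDl="(997636718750)" and mm="(61/32)" and C="0.15" and QQ="(318309859154, 318318318319)" and U="(636619718308, 676426426428)" and UA="(405284665738, 457552710371)" and UB="(164255660282, 209354482768)" and WW="(294249062025, 353686328807)" and B="(1176996248100, 1503166897430)" and PA="(942029504228, 944261058688)" and PB="(-22632334291, 22632334291)" and PC="(-329197589680, -328419603184)" and PD="(-64917947785, 64917947785)" and PE="(196011794150, 399816827928)" and PF="(1082127019529, 1453402141670)"])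
  apply simp
  apply (rule inv_pi)
  apply assumption
  apply assumption
  apply simp
  apply simp
  apply (rule sin_approx, simp add: Psin_def power_divide)
  apply (rule cos_approx, simp add: Pcos_def power_divide)
  by (simp_all add: mulchk_def)

lemma ca_43: "okI 0.15 (real_of_int (2125000000000) / real_of_int 1000000000000) (real_of_int (2250000000000) / real_of_int 1000000000000)"
  apply (rule okI_cell, rule cellZ[where S="(1000000000000)" and L="(2125000000000)" and H="(2250000000000)" and M="(2031250000000)" and CC="(150000000000)" and SV="(895850997959)" and CV="(-444354576274)" and E="(2)" and R="(68750000000)" and CDl="(997636718750)" and mm="(65/32)" and C="0.15" and QQ="(318309859154, 318318318319)" and U="(676408450702, 716216216218)" and UA="(457528392181, 512965668374)" and UB="(209332229651, 263133776931)" and WW="(237202440182, 294275445290)" and B="(1008110370773, 1324239503805)" and PA="(893733850090, 895850997961)" and PB="(-30549377119, 30549377119)" and PC="(-444354576276, -443304441433)" and PD="(-61589756110, 61589756110)" and PE="(160777209491, 376425933707)" and PF="(870185219092, 1226775973021)"])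
  apply simp
  apply (rule inv_pi)
  apply assumption
  apply assumption
  apply simp
  apply simp
  apply (rule sin_approx, simp add: Psin_def power_divide)
  apply (rule cos_approx, simp add: Pcos_def power_divide)
  by (simp_all add: mulchk_def)

lemma ca_44: "okI 0.15 (real_of_int (2250000000000) / real_of_int 1000000000000) (real_of_int (2375000000000) / real_of_int 1000000000000)"
  apply (rule okI_cell, rule cellZ[where S="(1000000000000)" and L="(2250000000000)" and H="(2375000000000)" and M="(2156250000000)" and CC="(150000000000)" and SV="(833461482035)" and CV="(-552577558327)" and E="(4)" and R="(68750000000)" and CDl="(997636718750)" and mm="(69/32)" and C="0.15" and QQ="(318309859154, 318318318319)" and U="(716197183096, 756006006008)" and UA="(512938405074, 571545081121)" and UB="(263105807399, 326663779754)" and WW="(183573617511, 237228997252)" and B="(826081278799, 1126837736947)" and PA="(831491778137, 833461482039)" and PB="(-37989707136, 37989707136)" and PC="(-552577558331, -551271662140)" and PD="(-57300476891, 57300476891)" and PE="(19767403719, 256981353212)" and PF="(655497205542, 981984085870)"])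
  apply simp
  apply (rule inv_pi)
  apply assumption
  apply assumption
  apply simp
  apply simp
  apply (rule sin_approx, simp add: Psin_def power_divide)
  apply (rule cos_approx, simp add: Pcos_def power_divide)
  by (simp_all add: mulchk_def)

lemma ca_45: "okI 0.15 (real_of_int (2375000000000) / real_of_int 1000000000000) (real_of_int (2500000000000) / real_of_int 1000000000000)"
  apply (rule okI_cell, rule cellZ[where S="(1000000000000)" and L="(2375000000000)" and H="(2500000000000)" and M="(2281250000000)" and CC="(150000000000)" and SV="(758066078441)" and CV="(-652177752399)" and E="(8)" and R="(68750000000)" and CDl="(997636718750)" and mm="(73/32)" and C="0.15" and QQ="(318309859154, 318318318319)" and U="(755985915490, 795795795798)" and UA="(571514704419, 633290948610)" and UB="(326629057367, 401057425592)" and WW="(134475528371, 183599648530)" and B="(638758759762, 917998242650)" and PA="(756274555083, 758066078449)" and PB="(-44837220478, 44837220478)" and PC="(-652177752407, -650636472937)" and PD="(-52117042894, 52117042894)" and PE="(-286186354166, 28330720017)" and PF="(454436829500, 737063817433)"])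
  apply simp
  apply (rule inv_pi)
  apply assumption
  apply assumption
  apply simp
  apply simp
  apply (rule sin_approx, simp add: Psin_def power_divide)
  apply (rule cos_approx, simp add: Pcos_def power_divide)
  by (simp_all add: mulchk_def)

lemma ca_46: "okI 0.15 (real_of_int (2500000000000) / real_of_int 1000000000000) (real_of_int (2625000000000) / real_of_int 1000000000000)"
  apply (rule okI_cell, rule cellZ[where S="(1000000000000)" and L="(2500000000000)" and H="(2625000000000)" and M="(2406250000000)" and CC="(150000000000)" and SV="(670841307234)" and CV="(-741600930778)" and E="(19)" and R="(68750000000)" and CDl="(997636718750)" and mm="(77/32)" and C="0.15" and QQ="(318309859154, 318318318319)" and U="(795774647885, 835585585588)" and UA="(633257290216, 698203270843)" and UB="(401014795611, 487487807416)" and WW="(91081265729, 134500215180)" and B="(455406328645, 706126129695)" and PA="(669255920531, 670841307253)" and PB="(-50985063993, 50985063993)" and PC="(-741600930797, -739848319184)" and PD="(-46120339874, 46120339874)" and PE="(-728584549225, -281715144375)" and PF="(281564460884, 509700461840)"])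
  apply simp
  apply (rule inv_pi)
  apply assumption
  apply assumption
  apply simp
  apply simp
  apply (rule sin_approx, simp add: Psin_def power_divide)
  apply (rule cos_approx, simp add: Pcos_def power_divide)
  by (simp_all add: mulchk_def)

lemma ca_47: "okI 0.15 (real_of_int (2625000000000) / real_of_int 1000000000000) (real_of_int (2750000000000) / real_of_int 1000000000000)"
  apply (rule okI_cell, rule cellZ[where S="(1000000000000)" and L="(2625000000000)" and H="(2750000000000)" and M="(2531250000000)" and CC="(150000000000)" and SV="(573148281794)" and CV="(-819451674687)" and E="(50)" and R="(68750000000)" and CDl="(997636718750)" and mm="(81/32)" and C="0.15" and QQ="(318309859154, 318318318319)" and U="(835563380279, 875375375378)" and UA="(698166162463, 766282047819)" and UB="(487435990408, 587188176810)" and WW="(54624081171, 91103665483)" and B="(286776426147, 501070160157)" and PA="(571793771156, 573148281844)" and PB="(-56337302639, 56337302639)" and PC="(-819451674737, -817515079859)" and PD="(-39403944377, 39403944377)" and PE="(-1308147952556, -719453960862)" and PF="(147820763875, 315416442634)"])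
  apply simp
  apply (rule inv_pi)
  apply assumption
  apply assumption
  apply simp
  apply simp
  apply (rule sin_approx, simp add: Psin_def power_divide)
  apply (rule cos_approx, simp add: Pcos_def power_divide)
  by (simp_all add: mulchk_def)

lemma ca_48: "okI 0.15 (real_of_int (2750000000000) / real_of_int 1000000000000) (real_of_int (2875000000000) / real_of_int 1000000000000)"
  apply (rule okI_cell, rule cellZ[where S="(1000000000000)" and L="(2750000000000)" and H="(2875000000000)" and M="(2656250000000)" and CC="(150000000000)" and SV="(466511469105)" and CV="(-884515149332)" and E="(127)" and R="(68750000000)" and CDl="(997636718750)" and mm="(85/32)" and C="0.15" and QQ="(318309859154, 318318318319)" and U="(875352112673, 915165165168)" and UA="(766241321161, 837527279537)" and UB="(587125762254, 701451943969)" and WW="(26397384894, 54643119933)" and B="(145185616917, 314197939615)" and PA="(465408971170, 466511469232)" and PB="(-60810416526, 60810416526)" and PC="(-884515149459, -882424791137)" and PD="(-32072663510, 32072663510)" and PE="(-2024478193415, -1294877591449)" and PF="(58741890759, 165683450020)"])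
  apply simp
  apply (rule inv_pi)
  apply assumption
  apply assumption
  apply simp
  apply simp
  apply (rule sin_approx, simp add: Psin_def power_divide)
  apply (rule cos_approx, simp add: Pcos_def power_divide)
  by (simp_all add: mulchk_def)

lemma ca_49: "okI 0.15 (real_of_int (2875000000000) / real_of_int 1000000000000) (real_of_int (3000000000000) / real_of_int 1000000000000)"
  apply (rule okI_cell, rule cellZ[where S="(1000000000000)" and L="(2875000000000)" and H="(3000000000000)" and M="(2781250000000)" and CC="(150000000000)" and SV="(352594900953)" and CV="(-935776061017)" and E="(317)" and R="(68750000000)" and CDl="(997636718750)" and mm="(89/32)" and C="0.15" and QQ="(318309859154, 318318318319)" and U="(915140845067, 954954954957)" and UA="(837482766309, 911938965997)" and UB="(701377383864, 831632677704)" and WW="(7754745709, 26411851247)" and B="(44589787826, 158471107482)" and PA="(351761619718, 352594901270)" and PB="(-64334604217, 64334604217)" and PC="(-935776061334, -933564558681)" and PD="(-24240899463, 24240899463)" and PE="(-2870254932900, -2008026976691)" and PF="(12816309636, 66071280477)"])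
  apply simp
  apply (rule inv_pi)
  apply assumption
  apply assumption
  apply simp
  apply simp
  apply (rule sin_approx, simp add: Psin_def power_divide)
  apply (rule cos_approx, simp add: Pcos_def power_divide)
  by (simp_all add: mulchk_def)

lemma ca_50: "okI 0.15 (real_of_int (3000000000000) / real_of_int 1000000000000) (real_of_int (3125000000000) / real_of_int 1000000000000)"
  apply (rule okI_cell, rule cellZ[where S="(1000000000000)" and L="(3000000000000)" and H="(3125000000000)" and M="(2906250000000)" and CC="(150000000000)" and SV="(233176207263)" and CV="(-972434500503)" and E="(761)" and R="(68750000000)" and CDl="(997636718750)" and mm="(93/32)" and C="0.15" and QQ="(318309859154, 318318318319)" and U="(954929577462, 994744744747)" and UA="(911890497911, 989517107202)" and UB="(831544280180, 979144105446)" and WW="(109891041, 7763284359)" and B="(659346246, 48520527244)" and PA="(232625145545, 233176208024)" and PB="(-66854871962, 66854871962)" and PC="(-972434501264, -970136363521)" and PD="(-16030864302, 16030864302)" and PE="(-3830169485657, -2852074824945)" and PF="(109300007, 14557666191)"])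
  apply simp
  apply (rule inv_pi)
  apply assumption
  apply assumption
  apply simp
  apply simp
  apply (rule sin_approx, simp add: Psin_def power_divide)
  apply (rule cos_approx, simp add: Pcos_def power_divide)
  by (simp_all add: mulchk_def)

lemma ca_51: "okI 0.15 (real_of_int (3125000000000) / real_of_int 1000000000000) (real_of_int (3141592920354) / real_of_int 1000000000000)"
  apply (rule okI_cell, rule cellZ[where S="(1000000000000)" and L="(3125000000000)" and H="(3141592920354)" and M="(2984375000000)" and CC="(150000000000)" and SV="(156570785013)" and CV="(-987666741227)" and E="(1293)" and R="(9375000000)" and CDl="(999956054687)" and mm="(191/64)" and C="0.15" and QQ="(318309859154, 318318318319)" and U="(994718309856, 1000026575250)" and UA="(989464515962, 1000053151207)" and UB="(979040028347, 1000106305240)" and WW="(-559974, 110996424)" and B="(-3518421, 697411160)" and PA="(156563903167, 156570786306)" and PB="(-9259375712, 9259375712)" and PC="(-987666742520, -987623336609)" and PD="(-1467851122, 1467851122)" and PE="(-3957169275711, -3820603195820)" and PF="(-583461, 115651806)"])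
  apply simp
  apply (rule inv_pi)
  apply assumption
  apply assumption
  apply simp
  apply simp
  apply (rule sin_approx, simp add: Psin_def power_divide)
  apply (rule cos_approx, simp add: Pcos_def power_divide)
  by (simp_all add: mulchk_def)

lemma alla: "okI 0.15 (real_of_int (-3141592920354) / real_of_int 1000000000000) (real_of_int (3141592920354) / real_of_int 1000000000000)"
  by (rule okI_trans[OF ca_0 okI_trans[OF ca_1 okI_trans[OF ca_2 okI_trans[OF ca_3 okI_trans[OF ca_4 okI_trans[OF ca_5 okI_trans[OF ca_6 okI_trans[OF ca_7 okI_trans[OF ca_8 okI_trans[OF ca_9 okI_trans[OF ca_10 okI_trans[OF ca_11 okI_trans[OF ca_12 okI_trans[OF ca_13 okI_trans[OF ca_14 okI_trans[OF ca_15 okI_trans[OF ca_16 okI_trans[OF ca_17 okI_trans[OF ca_18 okI_trans[OF ca_19 okI_trans[OF ca_20 okI_trans[OF ca_21 okI_trans[OF ca_22 okI_trans[OF ca_23 okI_trans[OF ca_24 okI_trans[OF ca_25 okI_trans[OF ca_26 okI_trans[OF ca_27 okI_trans[OF ca_28 okI_trans[OF ca_29 okI_trans[OF ca_30 okI_trans[OF ca_31 okI_trans[OF ca_32 okI_trans[OF ca_33 okI_trans[OF ca_34 okI_trans[OF ca_35 okI_trans[OF ca_36 okI_trans[OF ca_37 okI_trans[OF ca_38 okI_trans[OF ca_39 okI_trans[OF ca_40 okI_trans[OF ca_41 okI_trans[OF ca_42 okI_trans[OF ca_43 okI_trans[OF ca_44 okI_trans[OF ca_45 okI_trans[OF ca_46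 okI_trans[OF ca_47 okI_trans[OF ca_48 okI_trans[OF ca_49 okI_trans[OF ca_50 ca_51]]]]]]]]]]]]]]]]]]]]]]]]]]]]]]]]]]]]]]]]]]]]]]]]]]])

lemma FFa: assumes "-pi < t" "t < pi" shows "FF 0.15 t < 0"
proof -
  have "real_of_int (-3141592920354) / real_of_int 1000000000000 \<le> t" "t \<le> real_of_int (3141592920354) / real_of_int 1000000000000"
    using assms pi_bnds by simp_all
  then show ?thesis using alla unfolding okI_def by blast
qed
lemma cb_0: "okI 0.45 (real_of_int (-3141592920354) / real_of_int 1000000000000) (real_of_int (-3125000000000) / real_of_int 1000000000000)"
  apply (rule okI_cell, rule cellZ[where S="(1000000000000)" and L="(-3141592920354)" and H="(-3125000000000)" and M="(-3578125000000)" and CC="(450000000000)" and SV="(422799553205)" and CV="(-906223278454)" and E="(48641)" and R="(13467920354)" and CDl="(999909307560)" and mm="(-229/64)" and C="0.45" and QQ="(318309859154, 318318318319)" and U="(-1000026575250, -994718309856)" and UA="(989464515962, 1000053151207)" and UB="(979040028347, 1000106305240)" and WW="(-559974, 110996424)" and B="(-697411160, 3518421)" and PA="(422761159845, 422799601846)" and PB="(-12204943593, 12204943593)" and PC="(-906223327095, -906141042217)" and PD="(-5694231364, 5694231364)" and PE="(-3648251883526, -3488547205628)" and PF="(-303377025, 1530530)"])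
  apply simp
  apply (rule inv_pi)
  apply assumption
  apply assumption
  apply simp
  apply simp
  apply (rule sin_approx, simp add: Psin_def power_divide)
  apply (rule cos_approx, simp add: Pcos_def power_divide)
  by (simp_all add: mulchk_def)

lemma cb_1: "okI 0.45 (real_of_int (-3125000000000) / real_of_int 1000000000000) (real_of_int (-3000000000000) / real_of_int 1000000000000)"
  apply (rule okI_cell, rule cellZ[where S="(1000000000000)" and L="(-3125000000000)" and H="(-3000000000000)" and M="(-3515625000000)" and CC="(450000000000)" and SV="(365371954293)" and CV="(-930861644440)" and E="(34194)" and R="(65625000000)" and CDl="(997846679687)" and mm="(-225/64)" and C="0.45" and QQ="(318309859154, 318318318319)" and U="(-994744744747, -954929577462)" and UA="(911890497911, 989517107202)" and UB="(831544280180, 979144105446)" and WW="(109891041, 7763284359)" and B="(-48520527244, -659346246)" and PA="(364585157321, 365371988487)" and PB="(-61087797661, 61087797661)" and PC="(-930861678634, -928857167032)" and PD="(-23977536745, 23977536745)" and PE="(-3699872705565, -2704925624325)" and PF="(-20692053673, -200109844)"])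
  apply simp
  apply (rule inv_pi)
  apply assumption
  apply assumption
  apply simp
  apply simp
  apply (rule sin_approx, simp add: Psin_def power_divide)
  apply (rule cos_approx, simp add: Pcos_def power_divide)
  by (simp_all add: mulchk_def)

lemma cb_2: "okI 0.45 (real_of_int (-3000000000000) / real_of_int 1000000000000) (real_of_int (-2875000000000) / real_of_int 1000000000000)"
  apply (rule okI_cell, rule cellZ[where S="(1000000000000)" and L="(-3000000000000)" and H="(-2875000000000)" and M="(-3390625000000)" and CC="(450000000000)" and SV="(246466274606)" and CV="(-969151385552)" and E="(16578)" and R="(65625000000)" and CDl="(997846679687)" and mm="(-217/64)" and C="0.45" and QQ="(318309859154, 318318318319)" and U="(-954954954957, -915140845067)" and UA="(837482766309, 911938965997)" and UB="(701377383864, 831632677704)" and WW="(7754745709, 26411851247)" and B="(-158471107482, -44589787826)" and PA="(245935537228, 246466291184)" and PB="(-63600560765, 63600560765)" and PC="(-969151402130, -967064475644)" and PD="(-16174350359, 16174350359)" and PE="(-2945923058741, -2099816719917)" and PF="(-49136637422, -8130277913)"])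
  apply simp
  apply (rule inv_pi)
  apply assumption
  apply assumption
  apply simp
  apply simp
  apply (rule sin_approx, simp add: Psin_def power_divide)
  apply (rule cos_approx, simp add: Pcos_def power_divide)
  by (simp_all add: mulchk_def)

lemma cb_3: "okI 0.45 (real_of_int (-2875000000000) / real_of_int 1000000000000) (real_of_int (-2750000000000) / real_of_int 1000000000000)"
  apply (rule okI_cell, rule cellZ[where S="(1000000000000)" and L="(-2875000000000)" and H="(-2750000000000)" and M="(-3265625000000)" and CC="(450000000000)" and SV="(123714572722)" and CV="(-992317852283)" and E="(7822)" and R="(65625000000)" and CDl="(997846679687)" and mm="(-209/64)" and C="0.45" and QQ="(318309859154, 318318318319)" and U="(-915165165168, -875352112673)" and UA="(766241321161, 837527279537)" and UB="(587125762254, 701451943969)" and WW="(26397384894, 54643119933)" and B="(-314197939615, -145185616917)" and PA="(123448167814, 123714580544)" and PB="(-65120859570, 65120859570)" and PC="(-992317860105, -990181066289)" and PD="(-8118769349, 8118769349)" and PE="(-2209676052382, -1495439854150)" and PF="(-59331706211, -8468286230)"])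
  apply simp
  apply (rule inv_pi)
  apply assumption
  apply assumption
  apply simp
  apply simp
  apply (rule sin_approx, simp add: Psin_def power_divide)
  apply (rule cos_approx, simp add: Pcos_def power_divide)
  by (simp_all add: mulchk_def)

lemma cb_4: "okI 0.45 (real_of_int (-2750000000000) / real_of_int 1000000000000) (real_of_int (-2625000000000) / real_of_int 1000000000000)"
  apply (rule okI_cell, rule cellZ[where S="(1000000000000)" and L="(-2750000000000)" and H="(-2625000000000)" and M="(-3140625000000)" and CC="(450000000000)" and SV="(-967652913)" and CV="(-999999535331)" and E="(3584)" and R="(65625000000)" and CDl="(997846679687)" and mm="(-201/64)" and C="0.45" and QQ="(318309859154, 318318318319)" and U="(-875375375378, -835563380279)" and UA="(698166162463, 766282047819)" and UB="(487435990408, 587188176810)" and WW="(54624081171, 91103665483)" and B="(-501070160157, -286776426147)" and PA="(-967656497, -965565670)" and PB="(-65624969742, 65624969742)" and PC="(-999999538915, -997846212442)" and PD="(-63502458, 63502458)" and PE="(-1523225081008, -922565800750)" and PF="(-32398897955, 33367577895)"])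
  apply simp
  apply (rule inv_pi)
  apply assumption
  apply assumption
  apply simp
  apply simp
  apply (rule sin_approx, simp add: Psin_def power_divide)
  apply (rule cos_approx, simp add: Pcos_def power_divide)
  by (simp_all add: mulchk_def)

lemma cb_5: "okI 0.45 (real_of_int (-2625000000000) / real_of_int 1000000000000) (real_of_int (-2500000000000) / real_of_int 1000000000000)"
  apply (rule okI_cell, rule cellZ[where S="(1000000000000)" and L="(-2625000000000)" and H="(-2500000000000)" and M="(-3015625000000)" and CC="(450000000000)" and SV="(-125634778276)" and CV="(-992076562330)" and E="(1592)" and R="(65625000000)" and CDl="(997846679687)" and mm="(-193/64)" and C="0.45" and QQ="(318309859154, 318318318319)" and U="(-835585585588, -795774647885)" and UA="(633257290216, 698203270843)" and UB="(401014795611, 487487807416)" and WW="(91081265729, 134500215180)" and B="(-706126129695, -455406328645)" and PA="(-125634779868, -125364244767)" and PB="(-65105024508, 65105024508)" and PC="(-992076563922, -989940302127)" and PD="(-8244782429, 8244782429)" and PE="(-925224066363, -398655529707)" and PF="(27442430265, 134686359843)"])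
  apply simp
  apply (rule inv_pi)
  apply assumption
  apply assumption
  apply simp
  apply simp
  apply (rule sin_approx, simp add: Psin_def power_divide)
  apply (rule cos_approx, simp add: Pcos_def power_divide)
  by (simp_all add: mulchk_def)

lemma cb_6: "okI 0.45 (real_of_int (-2500000000000) / real_of_int 1000000000000) (real_of_int (-2375000000000) / real_of_int 1000000000000)"
  apply (rule okI_cell, rule cellZ[where S="(1000000000000)" and L="(-2500000000000)" and H="(-2375000000000)" and M="(-2890625000000)" and CC="(450000000000)" and SV="(-248341414770)" and CV="(-968672567466)" and E="(684)" and R="(65625000000)" and CDl="(997846679687)" and mm="(-185/64)" and C="0.45" and QQ="(318309859154, 318318318319)" and U="(-795795795798, -755985915490)" and UA="(571514704419, 633290948610)" and UB="(326629057367, 401057425592)" and WW="(134475528371, 183599648530)" and B="(-917998242650, -638758759762)" and PA="(-248341415454, -247806655474)" and PB="(-63569137285, 63569137285)" and PC="(-968672568150, -966586704467)" and PD="(-16297405390, 16297405390)" and PE="(-400237184161, 39621063127)" and PF="(117683328620, 286333339279)"])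
  apply simp
  apply (rule inv_pi)
  apply assumption
  apply assumption
  apply simp
  apply simp
  apply (rule sin_approx, simp add: Psin_def power_divide)
  apply (rule cos_approx, simp add: Pcos_def power_divide)
  by (simp_all add: mulchk_def)

lemma cb_7: "okI 0.45 (real_of_int (-2375000000000) / real_of_int 1000000000000) (real_of_int (-2312500000000) / real_of_int 1000000000000)"
  apply (rule okI_cell, rule cellZ[where S="(1000000000000)" and L="(-2375000000000)" and H="(-2312500000000)" and M="(-2796875000000)" and CC="(450000000000)" and SV="(-337930954449)" and CV="(-941170904059)" and E="(354)" and R="(34375000000)" and CDl="(999409179687)" and mm="(-179/64)" and C="0.45" and QQ="(318309859154, 318318318319)" and U="(-756006006008, -736091549293)" and UA="(541830768940, 571545081121)" and UB="(293580582170, 326663779754)" and WW="(183573617511, 209919044291)" and B="(-997115460383, -849027980988)" and PA="(-337930954803, -337731297622)" and PB="(-32352749840, 32352749840)" and PC="(-941170904413, -940614840817)" and PD="(-11616376572, 11616376572)" and PE="(37176030194, 227255494156)" and PF="(259274931860, 369215606628)"])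
  apply simp
  apply (rule inv_pi)
  apply assumption
  apply assumption
  apply simp
  apply simp
  apply (rule sin_approx, simp add: Psin_def power_divide)
  apply (rule cos_approx, simp add: Pcos_def power_divide)
  by (simp_all add: mulchk_def)

lemma cb_8: "okI 0.45 (real_of_int (-2312500000000) / real_of_int 1000000000000) (real_of_int (-2281250000000) / real_of_int 1000000000000)"
  apply (rule okI_cell, rule cellZ[where S="(1000000000000)" and L="(-2312500000000)" and H="(-2281250000000)" and M="(-2750000000000)" and CC="(450000000000)" and SV="(-381660992020)" and CV="(-924302378880)" and E="(253)" and R="(18750000000)" and CDl="(999824218750)" and mm="(-11/4)" and C="0.45" and QQ="(318309859154, 318318318319)" and U="(-736111111113, -726144366195)" and UA="(527285640556, 541859567905)" and UB="(278030146736, 293611791331)" and WW="(209892655520, 223458865625)" and B="(-1033497253516, -957635240810)" and PA="(-381660992273, -381593902920)" and PB="(-17330669609, 17330669609)" and PC="(-924302379133, -924139903599)" and PD="(-7156143606, 7156143606)" and PE="(218544053628, 309075746945)" and PF="(348831309150, 412356786731)"])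
  apply simp
  apply (rule inv_pi)
  apply assumption
  apply assumption
  apply simp
  apply simp
  apply (rule sin_approx, simp add: Psin_def power_divide)
  apply (rule cos_approx, simp add: Pcos_def power_divide)
  by (simp_all add: mulchk_def)

lemma cb_9: "okI 0.45 (real_of_int (-2281250000000) / real_of_int 1000000000000) (real_of_int (-2250000000000) / real_of_int 1000000000000)"
  apply (rule okI_cell, rule cellZ[where S="(1000000000000)" and L="(-2281250000000)" and H="(-2250000000000)" and M="(-2718750000000)" and CC="(450000000000)" and SV="(-410354397603)" and CV="(-911926131168)" and E="(202)" and R="(18750000000)" and CDl="(999824218750)" and mm="(-87/32)" and C="0.45" and QQ="(318309859154, 318318318319)" and U="(-726163663666, -716197183096)" and UA="(512938405074, 527313666429)" and UB="(263105807399, 278059702803)" and WW="(223432369944, 237228997252)" and B="(-1082357299963, -1005445664748)" and PA="(-410354397805, -410282264792)" and PB="(-17098614964, 17098614964)" and PC="(-911926131370, -911765831450)" and PD="(-7694144959, 7694144959)" and PE="(299827946232, 387495940834)" and PF="(395324796169, 462656888762)"])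
  apply simp
  apply (rule inv_pi)
  apply assumption
  apply assumption
  apply simp
  apply simp
  apply (rule sin_approx, simp add: Psin_def power_divide)
  apply (rule cos_approx, simp add: Pcos_def power_divide)
  by (simp_all add: mulchk_def)

lemma cb_10: "okI 0.45 (real_of_int (-2250000000000) / real_of_int 1000000000000) (real_of_int (-2234375000000) / real_of_int 1000000000000)"
  apply (rule okI_cell, rule cellZ[where S="(1000000000000)" and L="(-2250000000000)" and H="(-2234375000000)" and M="(-2687500000000)" and CC="(450000000000)" and SV="(-438647099079)" and CV="(-898659403074)" and E="(161)" and R="(12500000000)" and CDl="(999921875000)" and mm="(-43/16)" and C="0.45" and QQ="(318309859154, 318318318319)" and U="(-716216216218, -711223591547)" and UA="(505838997173, 512965668374)" and UB="(255873091060, 263133776931)" and WW="(237202440182, 244195096715)" and B="(-1098877935218, -1059998404563)" and PA="(-438647099240, -438612829613)" and PB="(-11233242541, 11233242541)" and PC="(-898659403235, -898589195147)" and PD="(-5483088741, 5483088741)" and PE="(376173914939, 420210578869)" and PF="(453021680439, 494363581072)"])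
  apply simp
  apply (rule inv_pi)
  apply assumption
  apply assumption
  apply simp
  apply simp
  apply (rule sin_approx, simp add: Psin_def power_divide)
  apply (rule cos_approx, simp add: Pcos_def power_divide)
  by (simp_all add: mulchk_def)

lemma cb_11: "okI 0.45 (real_of_int (-2234375000000) / real_of_int 1000000000000) (real_of_int (-2218750000000) / real_of_int 1000000000000)"
  apply (rule okI_cell, rule cellZ[where S="(1000000000000)" and L="(-2234375000000)" and H="(-2218750000000)" and M="(-2671875000000)" and CC="(450000000000)" and SV="(-452634536207)" and CV="(-891696123612)" and E="(143)" and R="(12500000000)" and CDl="(999921875000)" and mm="(-171/64)" and C="0.45" and QQ="(318309859154, 318318318319)" and U="(-711242492495, -706249999997)" and UA="(498789062495, 505865883131)" and UB="(248790528864, 255900291716)" and WW="(244168525453, 251212403875)" and B="(-1122605429817, -1083497831697)" and PA="(-452634536350, -452599173990)" and PB="(-11146201547, 11146201547)" and PC="(-891696123755, -891626459709)" and PD="(-5657931705, 5657931705)" and PE="(411619427403, 455188970704)" and PF="(478313338438, 520642774608)"])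
  apply simp
  apply (rule inv_pi)
  apply assumption
  apply assumption
  apply simp
  apply simp
  apply (rule sin_approx, simp add: Psin_def power_divide)
  apply (rule cos_approx, simp add: Pcos_def power_divide)
  by (simp_all add: mulchk_def)

lemma cb_12: "okI 0.45 (real_of_int (-2218750000000) / real_of_int 1000000000000) (real_of_int (-2203125000000) / real_of_int 1000000000000)"
  apply (rule okI_cell, rule cellZ[where S="(1000000000000)" and L="(-2218750000000)" and H="(-2203125000000)" and M="(-2656250000000)" and CC="(450000000000)" and SV="(-466511469105)" and CV="(-884515149332)" and E="(127)" and R="(12500000000)" and CDl="(999921875000)" and mm="(-85/32)" and C="0.45" and QQ="(318309859154, 318318318319)" and U="(-706268768771, -701276408448)" and UA="(491788601045, 498815573742)" and UB="(241856028117, 248816976608)" and WW="(251185829123, 258278826028)" and B="(-1146112290500, -1106787559573)" and PA="(-466511469232, -466475022769)" and PB="(-11056439369, 11056439369)" and PC="(-884515149459, -884446046458)" and PD="(-5831393366, 5831393366)" and PE="(445543856668, 488679014678)" and PF="(504051622505, 547346449596)"])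
  apply simp
  apply (rule inv_pi)
  apply assumption
  apply assumption
  apply simp
  apply simp
  apply (rule sin_approx, simp add: Psin_def power_divide)
  apply (rule cos_approx, simp add: Pcos_def power_divide)
  by (simp_all add: mulchk_def)

lemma cb_13: "okI 0.45 (real_of_int (-2203125000000) / real_of_int 1000000000000) (real_of_int (-2187500000000) / real_of_int 1000000000000)"
  apply (rule okI_cell, rule cellZ[where S="(1000000000000)" and L="(-2203125000000)" and H="(-2187500000000)" and M="(-2640625000000)" and CC="(450000000000)" and SV="(-480274509918)" and CV="(-877118233366)" and E="(114)" and R="(12500000000)" and CDl="(999921875000)" and mm="(-169/64)" and C="0.45" and QQ="(318309859154, 318318318319)" and U="(-701295045047, -696302816899)" and UA="(484837612821, 491814740208)" and UB="(235067510805, 241881738686)" and WW="(258252258269, 265392285164)" and B="(-1169384756504, -1129853629926)" and PA="(-480274510032, -480236988357)" and PB="(-10963977919, 10963977919)" and PC="(-877118233480, -877049708390)" and PD="(-6003431376, 6003431376)" and PE="(477951426267, 520684060738)" and PF="(530209814269, 574446799618)"])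
  apply simp
  apply (rule inv_pi)
  apply assumption
  apply assumption
  apply simp
  apply simp
  apply (rule sin_approx, simp add: Psin_def power_divide)
  apply (rule cos_approx, simp add: Pcos_def power_divide)
  by (simp_all add: mulchk_def)

lemma cb_14: "okI 0.45 (real_of_int (-2187500000000) / real_of_int 1000000000000) (real_of_int (-2171875000000) / real_of_int 1000000000000)"
  apply (rule okI_cell, rule cellZ[where S="(1000000000000)" and L="(-2187500000000)" and H="(-2171875000000)" and M="(-2625000000000)" and CC="(450000000000)" and SV="(-493920298598)" and CV="(-869507181564)" and E="(101)" and R="(12500000000)" and CDl="(999921875000)" and mm="(-21/8)" and C="0.45" and QQ="(318309859154, 318318318319)" and U="(-696321321323, -691329225350)" and UA="(477936097823, 484863382530)" and UB="(228422913602, 235092499719)" and WW="(265365734658, 272550717957)" and B="(-1192409391062, -1152682409920)" and PA="(-493920298699, -493881710973)" and PB="(-10868839771, 10868839771)" and PC="(-869507181665, -869439251214)" and PD="(-6174003734, 6174003734)" and PE="(508847385256, 551208484267)" and PF="(556760440399, 601915309218)"])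
  apply simp
  apply (rule inv_pi)
  apply assumption
  apply assumption
  apply simp
  apply simp
  apply (rule sin_approx, simp add: Psin_def power_divide)
  apply (rule cos_approx, simp add: Pcos_def power_divide)
  by (simp_all add: mulchk_def)

lemma cb_15: "okI 0.45 (real_of_int (-2171875000000) / real_of_int 1000000000000) (real_of_int (-2156250000000) / real_of_int 1000000000000)"
  apply (rule okI_cell, rule cellZ[where S="(1000000000000)" and L="(-2171875000000)" and H="(-2156250000000)" and M="(-2609375000000)" and CC="(450000000000)" and SV="(-507445503720)" and CV="(-861683852055)" and E="(90)" and R="(12500000000)" and CDl="(999921875000)" and mm="(-167/64)" and C="0.45" and QQ="(318309859154, 318318318319)" and U="(-691347597600, -686355633800)" and UA="(471084056048, 477961500708)" and UB="(221920187862, 228447196160)" and WW="(272524194743, 279752075767)" and B="(-1215173079113, -1175260589829)" and PA="(-507445503810, -507405859450)" and PB="(-10771048152, 10771048152)" and PC="(-861683852145, -861616532914)" and PD="(-6343068798, 6343068798)" and PE="(538237979267, 580257657697)" and PF="(583675321255, 629722803095)"])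
  apply simp
  apply (rule inv_pi)
  apply assumption
  apply assumption
  apply simp
  apply simp
  apply (rule sin_approx, simp add: Psin_def power_divide)
  apply (rule cos_approx, simp add: Pcos_def power_divide)
  by (simp_all add: mulchk_def)

lemma cb_16: "okI 0.45 (real_of_int (-2156250000000) / real_of_int 1000000000000) (real_of_int (-2140625000000) / real_of_int 1000000000000)"
  apply (rule okI_cell, rule cellZ[where S="(1000000000000)" and L="(-2156250000000)" and H="(-2140625000000)" and M="(-2593750000000)" and CC="(450000000000)" and SV="(-520846823300)" and CV="(-853650154794)" and E="(80)" and R="(12500000000)" and CDl="(999921875000)" and mm="(-83/32)" and C="0.45" and QQ="(318309859154, 318318318319)" and U="(-686373873876, -681382042251)" and UA="(464281487502, 471109094740)" and UB="(215557299637, 221943779147)" and WW="(279725589666, 286994324634)" and B="(-1237663024985, -1197575180757)" and PA="(-520846823380, -520806132061)" and PB="(-10670626936, 10670626936)" and PC="(-853650154874, -853583463295)" and PD="(-6510585293, 6510585293)" and PE="(566130421463, 607837921910)" and PF="(610925619760, 657839495391)"])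
  apply simp
  apply (rule inv_pi)
  apply assumption
  apply assumption
  apply simp
  apply simp
  apply (rule sin_approx, simp add: Psin_def power_divide)
  apply (rule cos_approx, simp add: Pcos_def power_divide)
  by (simp_all add: mulchk_def)

lemma cb_17: "okI 0.45 (real_of_int (-2140625000000) / real_of_int 1000000000000) (real_of_int (-2125000000000) / real_of_int 1000000000000)"
  apply (rule okI_cell, rule cellZ[where S="(1000000000000)" and L="(-2140625000000)" and H="(-2125000000000)" and M="(-2578125000000)" and CC="(450000000000)" and SV="(-534120985598)" and CV="(-845408051091)" and E="(71)" and R="(12500000000)" and CDl="(999921875000)" and mm="(-165/64)" and C="0.45" and QQ="(318309859154, 318318318319)" and U="(-681400150152, -676408450702)" and UA="(457528392181, 464306164628)" and UB="(209332229651, 215580214512)" and WW="(286967885255, 294275445290)" and B="(-1259866750148, -1219613512333)" and PA="(-534120985669, -534079257325)" and PB="(-10567600640, 10567600640)" and PC="(-845408051162, -845342003516)" and PD="(-6676512321, 6676512321)" and PE="(592532863416, 633956557816)" and PF="(638481890356, 686235039076)"])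
  apply simp
  apply (rule inv_pi)
  apply assumption
  apply assumption
  apply simp
  apply simp
  apply (rule sin_approx, simp add: Psin_def power_divide)
  apply (rule cos_approx, simp add: Pcos_def power_divide)
  by (simp_all add: mulchk_def)

lemma cb_18: "okI 0.45 (real_of_int (-2125000000000) / real_of_int 1000000000000) (real_of_int (-2109375000000) / real_of_int 1000000000000)"
  apply (rule okI_cell, rule cellZ[where S="(1000000000000)" and L="(-2125000000000)" and H="(-2109375000000)" and M="(-2562500000000)" and CC="(450000000000)" and SV="(-547264749918)" and CV="(-836959553139)" and E="(63)" and R="(12500000000)" and CDl="(999921875000)" and mm="(-41/16)" and C="0.45" and QQ="(318309859154, 318318318319)" and U="(-676426426428, -671434859152)" and UA="(450824770084, 457552710371)" and UB="(203242973321, 209354482768)" and WW="(294249062025, 301593433154)" and B="(-1281772090905, -1241363230417)" and PA="(-547264749981, -547221994796)" and PB="(-10461994416, 10461994416)" and PC="(-836959553202, -836894165610)" and PD="(-6840809375, 6840809375)" and PE="(617454366083, 658621757678)" and PF="(666314128030, 714878575320)"])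
  apply simp
  apply (rule inv_pi)
  apply assumption
  apply assumption
  apply simp
  apply simp
  apply (rule sin_approx, simp add: Psin_def power_divide)
  apply (rule cos_approx, simp add: Pcos_def power_divide)
  by (simp_all add: mulchk_def)

lemma cb_19: "okI 0.45 (real_of_int (-2109375000000) / real_of_int 1000000000000) (real_of_int (-2093750000000) / real_of_int 1000000000000)"
  apply (rule okI_cell, rule cellZ[where S="(1000000000000)" and L="(-2109375000000)" and H="(-2093750000000)" and M="(-2546875000000)" and CC="(450000000000)" and SV="(-560274907398)" and CV="(-828306723516)" and E="(56)" and R="(12500000000)" and CDl="(999921875000)" and mm="(-163/64)" and C="0.45" and QQ="(318309859154, 318318318319)" and U="(-671452702705, -666461267603)" and UA="(444170621214, 450848731970)" and UB="(197287540749, 203264579119)" and WW="(301567115178, 308946298322)" and B="(-1303367196046, -1262812294807)" and PA="(-560274907454, -560231135864)" and PB="(-10353834045, 10353834045)" and PC="(-828306723572, -828242011997)" and PD="(-7003436344, 7003436344)" and PE="(640904870687, 681842596558)" and PF="(694391817372, 743738782791)"])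
  apply simp
  apply (rule inv_pi)
  apply assumption
  apply assumption
  apply simp
  apply simp
  apply (rule sin_approx, simp add: Psin_def power_divide)
  apply (rule cos_approx, simp add: Pcos_def power_divide)
  by (simp_all add: mulchk_def)

lemma cb_20: "okI 0.45 (real_of_int (-2093750000000) / real_of_int 1000000000000) (real_of_int (-2078125000000) / real_of_int 1000000000000)"
  apply (rule okI_cell, rule cellZ[where S="(1000000000000)" and L="(-2093750000000)" and H="(-2078125000000)" and M="(-2531250000000)" and CC="(450000000000)" and SV="(-573148281794)" and CV="(-819451674687)" and E="(50)" and R="(12500000000)" and CDl="(999921875000)" and mm="(-81/32)" and C="0.45" and QQ="(318309859154, 318318318319)" and U="(-666478978981, -661487676054)" and UA="(437565945571, 444194229424)" and UB="(191463956723, 197308513454)" and WW="(308920054605, 316332065582)" and B="(-1324640524625, -1283948976952)" and PA="(-573148281844, -573103504534)" and PB="(-10243145935, 10243145935)" and PC="(-819451674737, -819387654974)" and PD="(-7164353524, 7164353524)" and PE="(662895169689, 703629003753)" and PF="(722683981590, 772783926955)"])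
  apply simp
  apply (rule inv_pi)
  apply assumption
  apply assumption
  apply simp
  apply simp
  apply (rule sin_approx, simp add: Psin_def power_divide)
  apply (rule cos_approx, simp add: Pcos_def power_divide)
  by (simp_all add: mulchk_def)

lemma cb_21: "okI 0.45 (real_of_int (-2078125000000) / real_of_int 1000000000000) (real_of_int (-2062500000000) / real_of_int 1000000000000)"
  apply (rule okI_cell, rule cellZ[where S="(1000000000000)" and L="(-2078125000000)" and H="(-2062500000000)" and M="(-2515625000000)" and CC="(450000000000)" and SV="(-585881730258)" and CV="(-810396568485)" and E="(44)" and R="(12500000000)" and CDl="(999921875000)" and mm="(-161/64)" and C="0.45" and QQ="(318309859154, 318318318319)" and U="(-661505255257, -656514084505)" and UA="(431010743153, 437589202733)" and UB="(185770260713, 191484310349)" and WW="(316305904882, 323748774408)" and B="(-1345580843634, -1304761857638)" and PA="(-585881730302, -585835958203)" and PB="(-10129957107, 10129957107)" and PC="(-810396568529, -810333256209)" and PD="(-7323521629, 7323521629)" and PE="(683436877782, 723991734283)" and PF="(751159231443, 801981909160)"])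
  apply simp
  apply (rule inv_pi)
  apply assumption
  apply assumption
  apply simp
  apply simp
  apply (rule sin_approx, simp add: Psin_def power_divide)
  apply (rule cos_approx, simp add: Pcos_def power_divide)
  by (simp_all add: mulchk_def)

lemma cb_22: "okI 0.45 (real_of_int (-2062500000000) / real_of_int 1000000000000) (real_of_int (-2046875000000) / real_of_int 1000000000000)"
  apply (rule okI_cell, rule cellZ[where S="(1000000000000)" and L="(-2062500000000)" and H="(-2046875000000)" and M="(-2500000000000)" and CC="(450000000000)" and SV="(-598472144100)" and CV="(-801143615584)" and E="(39)" and R="(12500000000)" and CDl="(999921875000)" and mm="(-5/2)" and C="0.45" and QQ="(318309859154, 318318318319)" and U="(-656531531533, -651540492955)" and UA="(424505013960, 431033651898)" and UB="(180204506877, 185790009069)" and WW="(323722705272, 331194478958)" and B="(-1366177225702, -1325239824707)" and PA="(-598472144139, -598425388424)" and PB="(-10014295196, 10014295196)" and PC="(-801143615623, -801081026200)" and PD="(-7480901802, 7480901802)" and PE="(702542402941, 742942340383)" and PF="(779785814045, 831300315568)"])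
  apply simp
  apply (rule inv_pi)
  apply assumption
  apply assumption
  apply simp
  apply simp
  apply (rule sin_approx, simp add: Psin_def power_divide)
  apply (rule cos_approx, simp add: Pcos_def power_divide)
  by (simp_all add: mulchk_def)

lemma cb_23: "okI 0.45 (real_of_int (-2046875000000) / real_of_int 1000000000000) (real_of_int (-2031250000000) / real_of_int 1000000000000)"
  apply (rule okI_cell, rule cellZ[where S="(1000000000000)" and L="(-2046875000000)" and H="(-2031250000000)" and M="(-2484375000000)" and CC="(450000000000)" and SV="(-610916449551)" and CV="(-791695074960)" and E="(35)" and R="(12500000000)" and CDl="(999921875000)" and mm="(-159/64)" and C="0.45" and QQ="(318309859154, 318318318319)" and U="(-651557807810, -646566901406)" and UA="(418048757993, 424527576919)" and UB="(174764764059, 180223663565)" and WW="(331168509726, 338667248074)" and B="(-1386419046803, -1345372070761)" and PA="(-610916449586, -610868721668)" and PB="(-9896188438, 9896188438)" and PC="(-791695074995, -791633223747)" and PD="(-7636455620, 7636455620)" and PE="(720224917604, 760493143113)" and PF="(808531661502, 860706465853)"])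
  apply simp
  apply (rule inv_pi)
  apply assumption
  apply assumption
  apply simp
  apply simp
  apply (rule sin_approx, simp add: Psin_def power_divide)
  apply (rule cos_approx, simp add: Pcos_def power_divide)
  by (simp_all add: mulchk_def)

lemma cb_24: "okI 0.45 (real_of_int (-2031250000000) / real_of_int 1000000000000) (real_of_int (-2000000000000) / real_of_int 1000000000000)"
  apply (rule okI_cell, rule cellZ[where S="(1000000000000)" and L="(-2031250000000)" and H="(-2000000000000)" and M="(-2468750000000)" and CC="(450000000000)" and SV="(-623211608512)" and CV="(-782053253338)" and E="(31)" and R="(18750000000)" and CDl="(999824218750)" and mm="(-79/32)" and C="0.45" and QQ="(318309859154, 318318318319)" and U="(-646584084086, -636619718308)" and UA="(405284665738, 418070977794)" and UB="(164255660282, 174783342474)" and WW="(338641386885, 353686328807)" and B="(-1436850710779, -1354565547540)" and PA="(-623211608543, -623102059565)" and PB="(-14663498501, 14663498501)" and PC="(-782053253369, -781915783008)" and PD="(-11685217661, 11685217661)" and PE="(732720294572, 805220722159)" and PF="(824169912612, 916531300945)"])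
  apply simp
  apply (rule inv_pi)
  apply assumption
  apply assumption
  apply simp
  apply simp
  apply (rule sin_approx, simp add: Psin_def power_divide)
  apply (rule cos_approx, simp add: Pcos_def power_divide)
  by (simp_all add: mulchk_def)

lemma cb_25: "okI 0.45 (real_of_int (-2000000000000) / real_of_int 1000000000000) (real_of_int (-1968750000000) / real_of_int 1000000000000)"
  apply (rule okI_cell, rule cellZ[where S="(1000000000000)" and L="(-2000000000000)" and H="(-1968750000000)" and M="(-2437500000000)" and CC="(450000000000)" and SV="(-647342517365)" and CV="(-762199229364)" and E="(24)" and R="(18750000000)" and CDl="(999824218750)" and mm="(-39/16)" and C="0.45" and QQ="(318309859154, 318318318319)" and U="(-636636636638, -626672535209)" and UA="(392718466385, 405306207110)" and UB="(154227793839, 164273121522)" and WW="(353660707301, 368790861070)" and B="(-1475163444280, -1392539034997)" and PA="(-647342517389, -647228726664)" and PB="(-14291235552, 14291235552)" and PC="(-762199229388, -762065249006)" and PD="(-12137672202, 12137672202)" and PE="(760697489865, 832128171058)" and PF="(881390163086, 976017925841)"])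
  apply simp
  apply (rule inv_pi)
  apply assumption
  apply assumption
  apply simp
  apply simp
  apply (rule sin_approx, simp add: Psin_def power_divide)
  apply (rule cos_approx, simp add: Pcos_def power_divide)
  by (simp_all add: mulchk_def)

lemma cb_26: "okI 0.45 (real_of_int (-1968750000000) / real_of_int 1000000000000) (real_of_int (-1937500000000) / real_of_int 1000000000000)"
  apply (rule okI_cell, rule cellZ[where S="(1000000000000)" and L="(-1968750000000)" and H="(-1937500000000)" and M="(-2406250000000)" and CC="(450000000000)" and SV="(-670841307234)" and CV="(-741600930778)" and E="(19)" and R="(18750000000)" and CDl="(999824218750)" and mm="(-77/32)" and C="0.45" and QQ="(318309859154, 318318318319)" and U="(-626689189191, -616725352110)" and UA="(380350159935, 392739339849)" and UB="(144666244162, 154244189066)" and WW="(368765509367, 383965924293)" and B="(-1511865826904, -1428966348797)" and PA="(-670841307253, -670723385891)" and PB="(-13905017453, 13905017453)" and PC="(-741600930797, -741470571220)" and PD="(-12578274511, 12578274511)" and PE="(783220186083, 853732772275)" and PF="(938571345769, 1035244568422)"])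
  apply simp
  apply (rule inv_pi)
  apply assumption
  apply assumption
  apply simp
  apply simp
  apply (rule sin_approx, simp add: Psin_def power_divide)
  apply (rule cos_approx, simp add: Pcos_def power_divide)
  by (simp_all add: mulchk_def)

lemma cb_27: "okI 0.45 (real_of_int (-1937500000000) / real_of_int 1000000000000) (real_of_int (-1875000000000) / real_of_int 1000000000000)"
  apply (rule okI_cell, rule cellZ[where S="(1000000000000)" and L="(-1937500000000)" and H="(-1875000000000)" and M="(-2359375000000)" and CC="(450000000000)" and SV="(-704854248507)" and CV="(-709352161042)" and E="(14)" and R="(34375000000)" and CDl="(999409179687)" and mm="(-151/64)" and C="0.45" and QQ="(318309859154, 318318318319)" and U="(-616741741744, -596830985913)" and UA="(356207225745, 380370376010)" and UB="(126883587672, 144681622946)" and WW="(383940870925, 414469136183)" and B="(-1606067902710, -1439778265968)" and PA="(-704854248521, -704437806285)" and PB="(-24383980537, 24383980537)" and PC="(-709352161056, -708933061362)" and PD="(-24229364793, 24229364793)" and PE="(775023140797, 908686316601)" and PF="(979126718000, 1171206113120)"])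
  apply simp
  apply (rule inv_pi)
  apply assumption
  apply assumption
  apply simp
  apply simp
  apply (rule sin_approx, simp add: Psin_def power_divide)
  apply (rule cos_approx, simp add: Pcos_def power_divide)
  by (simp_all add: mulchk_def)

lemma cb_28: "okI 0.45 (real_of_int (-1875000000000) / real_of_int 1000000000000) (real_of_int (-1750000000000) / real_of_int 1000000000000)"
  apply (rule okI_cell, rule cellZ[where S="(1000000000000)" and L="(-1875000000000)" and H="(-1750000000000)" and M="(-2265625000000)" and CC="(450000000000)" and SV="(-768163405704)" and CV="(-640253841959)" and E="(7)" and R="(65625000000)" and CDl="(997846679687)" and mm="(-145/64)" and C="0.45" and QQ="(318309859154, 318318318319)" and U="(-596846846849, -557042253519)" and UA="(310296072205, 356226158594)" and UB="(96283652425, 126897076067)" and WW="(414444758878, 475691508016)" and B="(-1783843155060, -1450556656073)" and PA="(-768163405711, -766509303831)" and PB="(-42016658380, 42016658380)" and PC="(-640253841966, -638875170348)" and PD="(-50410723500, 50410723500)" and PE="(728882387649, 982330889151)" and PF="(1050917629134, 1445234161695)"])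
  apply simp
  apply (rule inv_pi)
  apply assumption
  apply assumption
  apply simp
  apply simp
  apply (rule sin_approx, simp add: Psin_def power_divide)
  apply (rule cos_approx, simp add: Pcos_def power_divide)
  by (simp_all add: mulchk_def)

lemma cb_29: "okI 0.45 (real_of_int (-1750000000000) / real_of_int 1000000000000) (real_of_int (-1625000000000) / real_of_int 1000000000000)"
  apply (rule okI_cell, rule cellZ[where S="(1000000000000)" and L="(-1750000000000)" and H="(-1625000000000)" and M="(-2140625000000)" and CC="(450000000000)" and SV="(-841993416235)" and CV="(-539487800621)" and E="(3)" and R="(65625000000)" and CDl="(997846679687)" and mm="(-137/64)" and C="0.45" and QQ="(318309859154, 318318318319)" and U="(-557057057059, -517253521125)" and UA="(267551205116, 310312564820)" and UB="(71583647359, 96293887886)" and WW="(475668758245, 536481237128)" and B="(-1877684329948, -1545923464296)" and PA="(-841993416238, -840180334705)" and PB="(-35403886916, 35403886916)" and PC="(-539487800624, -538326110578)" and PD="(-55255817941, 55255817941)" and PE="(687040285672, 934043732368)" and PF="(1244122794149, 1647475167271)"])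
  apply simp
  apply (rule inv_pi)
  apply assumption
  apply assumption
  apply simp
  apply simp
  apply (rule sin_approx, simp add: Psin_def power_divide)
  apply (rule cos_approx, simp add: Pcos_def power_divide)
  by (simp_all add: mulchk_def)

lemma cb_30: "okI 0.45 (real_of_int (-1625000000000) / real_of_int 1000000000000) (real_of_int (-1500000000000) / real_of_int 1000000000000)"
  apply (rule okI_cell, rule cellZ[where S="(1000000000000)" and L="(-1625000000000)" and H="(-1500000000000)" and M="(-2015625000000)" and CC="(450000000000)" and SV="(-902684401118)" and CV="(-430303232592)" and E="(2)" and R="(65625000000)" and CDl="(997846679687)" and mm="(-129/64)" and C="0.45" and QQ="(318309859154, 318318318319)" and U="(-517267267269, -477464788731)" and UA="(227972624477, 267565425788)" and UB="(51971517510, 71591257078)" and WW="(536460405501, 596026268557)" and B="(-1937085372811, -1609381216503)" and PA="(-902684401120, -900740632458)" and PB="(-28238649639, 28238649639)" and PC="(-430303232594, -429376651898)" and PD="(-59238663824, 59238663824)" and PE="(581284112996, 826430381387)" and PF="(1404188302510, 1803277424838)"])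
  apply simp
  apply (rule inv_pi)
  apply assumption
  apply assumption
  apply simp
  apply simp
  apply (rule sin_approx, simp add: Psin_def power_divide)
  apply (rule cos_approx, simp add: Pcos_def power_divide)
  by (simp_all add: mulchk_def)

lemma cb_31: "okI 0.45 (real_of_int (-1500000000000) / real_of_int 1000000000000) (real_of_int (-1375000000000) / real_of_int 1000000000000)"
  apply (rule okI_cell, rule cellZ[where S="(1000000000000)" and L="(-1500000000000)" and H="(-1375000000000)" and M="(-1890625000000)" and CC="(450000000000)" and SV="(-949289297831)" and CV="(-314403926539)" and E="(2)" and R="(65625000000)" and CDl="(997846679687)" and mm="(-121/64)" and C="0.45" and QQ="(318309859154, 318318318319)" and U="(-477477477479, -437676056336)" and UA="(191560330289, 227984741500)" and UB="(36695360140, 51977042357)" and WW="(596007559356, 653574699563)" and B="(-1960724098689, -1639020788229)" and PA="(-949289297833, -947245173901)" and PB="(-20632757680, 20632757680)" and PC="(-314403926541, -313726914175)" and PD="(-62297110171, 62297110171)" and PE="(424448142572, 670462992181)" and PF="(1518737012817, 1901749548095)"])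
  apply simp
  apply (rule inv_pi)
  apply assumption
  apply assumption
  apply simp
  apply simp
  apply (rule sin_approx, simp add: Psin_def power_divide)
  apply (rule cos_approx, simp add: Pcos_def power_divide)
  by (simp_all add: mulchk_def)

lemma cb_32: "okI 0.45 (real_of_int (-1375000000000) / real_of_int 1000000000000) (real_of_int (-1250000000000) / real_of_int 1000000000000)"
  apply (rule okI_cell, rule cellZ[where S="(1000000000000)" and L="(-1375000000000)" and H="(-1250000000000)" and M="(-1765625000000)" and CC="(450000000000)" and SV="(-981080852551)" and CV="(-193598452367)" and E="(2)" and R="(65625000000)" and CDl="(997846679687)" and mm="(-113/64)" and C="0.45" and QQ="(318309859154, 318318318319)" and U="(-437687687689, -397887323942)" and UA="(158314322553, 191570511955)" and UB="(25063424725, 36699261051)" and WW="(653558237140, 708434779620)" and B="(-1948195643955, -1633895592850)" and PA="(-981080852553, -978968271220)" and PB="(-12704898437, 12704898437)" and PC="(-193598452369, -193181572884)" and PD="(-64383430949, 64383430949)" and PE="(229235504067, 477168309559)" and PF="(1578773466322, 1936089071104)"])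
  apply simp
  apply (rule inv_pi)
  apply assumption
  apply assumption
  apply simp
  apply simp
  apply (rule sin_approx, simp add: Psin_def power_divide)
  apply (rule cos_approx, simp add: Pcos_def power_divide)
  by (simp_all add: mulchk_def)

lemma cb_33: "okI 0.45 (real_of_int (-1250000000000) / real_of_int 1000000000000) (real_of_int (-1125000000000) / real_of_int 1000000000000)"
  apply (rule okI_cell, rule cellZ[where S="(1000000000000)" and L="(-1250000000000)" and H="(-1125000000000)" and M="(-1640625000000)" and CC="(450000000000)" and SV="(-997562968697)" and CV="(-69771939096)" and E="(2)" and R="(65625000000)" and CDl="(997846679687)" and mm="(-105/64)" and C="0.45" and QQ="(318309859154, 318318318319)" and U="(-397897897899, -358098591548)" and UA="(128234601268, 158322737153)" and UB="(16444112962, 25066089100)" and WW="(708420614793, 759974910427)" and B="(-1899937276068, -1593946383284)" and PA="(-997562968699, -995414896091)" and PB="(-4578783504, 4578783504)" and PC="(-69771939098, -69621697760)" and PD="(-65465069821, 65465069821)" and PE="(7688113440, 257130901931)" and PF="(1579339638085, 1904006470915)"])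
  apply simp
  apply (rule inv_pi)
  apply assumption
  apply assumption
  apply simp
  apply simp
  apply (rule sin_approx, simp add: Psin_def power_divide)
  apply (rule cos_approx, simp add: Pcos_def power_divide)
  by (simp_all add: mulchk_def)

lemma cb_34: "okI 0.45 (real_of_int (-1125000000000) / real_of_int 1000000000000) (real_of_int (-1000000000000) / real_of_int 1000000000000)"
  apply (rule okI_cell, rule cellZ[where S="(1000000000000)" and L="(-1125000000000)" and H="(-1000000000000)" and M="(-1515625000000)" and CC="(450000000000)" and SV="(-998478448360)" and CV="(55143341948)" and E="(2)" and R="(65625000000)" and CDl="(997846679687)" and mm="(-97/64)" and C="0.45" and QQ="(318309859154, 318318318319)" and U="(-358108108109, -318309859154)" and UA="(101321166434, 128241417094)" and UB="(10265978767, 16445861059)" and WW="(759963026870, 807623645900)" and B="(-1817153203275, -1519926053740)" and PA="(-998478448362, -996328404433)" and PB="(-3618781816, 3618781816)" and PC="(55024600667, 55143341950)" and PD="(-65525148174, 65525148174)" and PE="(-233904299304, 20354304628)" and PF="(1508845219213, 1820964191811)"])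
  apply simp
  apply (rule inv_pi)
  apply assumption
  apply assumption
  apply simp
  apply simp
  apply (rule sin_approx, simp add: Psin_def power_divide)
  apply (rule cos_approx, simp add: Pcos_def power_divide)
  by (simp_all add: mulchk_def)

lemma cb_35: "okI 0.45 (real_of_int (-1000000000000) / real_of_int 1000000000000) (real_of_int (-875000000000) / real_of_int 1000000000000)"
  apply (rule okI_cell, rule cellZ[where S="(1000000000000)" and L="(-1000000000000)" and H="(-875000000000)" and M="(-1390625000000)" and CC="(450000000000)" and SV="(-983813005786)" and CV="(179198129584)" and E="(2)" and R="(65625000000)" and CDl="(997846679687)" and mm="(-89/64)" and C="0.45" and QQ="(318309859154, 318318318319)" and U="(-318318318319, -278521126759)" and UA="(77574018051, 101326551778)" and UB="(6017728276, 10267070096)" and WW="(807613966539, 850869692175)" and B="(-1701739384350, -1413324441443)" and PA="(-983813005788, -981694541254)" and PB="(-11759877255, 11759877255)" and PC="(178812258609, 179198129586)" and PD="(-64562728505, 64562728505)" and PE="(-478720396533, -221461012603)" and PF="(1370832367232, 1694205585066)"])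
  apply simp
  apply (rule inv_pi)
  apply assumption
  apply assumption
  apply simp
  apply simp
  apply (rule sin_approx, simp add: Psin_def power_divide)
  apply (rule cos_approx, simp add: Pcos_def power_divide)
  by (simp_all add: mulchk_def)

lemma cb_36: "okI 0.45 (real_of_int (-875000000000) / real_of_int 1000000000000) (real_of_int (-750000000000) / real_of_int 1000000000000)"
  apply (rule okI_cell, rule cellZ[where S="(1000000000000)" and L="(-875000000000)" and H="(-750000000000)" and M="(-1265625000000)" and CC="(450000000000)" and SV="(-953795490302)" and CV="(300456590342)" and E="(2)" and R="(65625000000)" and CDl="(997846679687)" and mm="(-81/64)" and C="0.45" and QQ="(318309859154, 318318318319)" and U="(-278528528530, -238732394365)" and UA="(56993156119, 77578141206)" and UB="(3248219844, 6018367993)" and WW="(850862085580, 889261907607)" and B="(-1556208338313, -1276293128370)" and PA="(-953795490304, -951741663096)" and PB="(-19717463742, 19717463742)" and PC="(299809611060, 300456590344)" and PD="(-62592829052, 62592829052)" and PE="(-719023252822, -465867616686)" and PF="(1189536081110, 1514988976543)"])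
  apply simp
  apply (rule inv_pi)
  apply assumption
  apply assumption
  apply simp
  apply simp
  apply (rule sin_approx, simp add: Psin_def power_divide)
  apply (rule cos_approx, simp add: Pcos_def power_divide)
  by (simp_all add: mulchk_def)

lemma cb_37: "okI 0.45 (real_of_int (-750000000000) / real_of_int 1000000000000) (real_of_int (-625000000000) / real_of_int 1000000000000)"
  apply (rule okI_cell, rule cellZ[where S="(1000000000000)" and L="(-750000000000)" and H="(-625000000000)" and M="(-1140625000000)" and CC="(450000000000)" and SV="(-908894315196)" and CV="(417026526499)" and E="(2)" and R="(65625000000)" and CDl="(997846679687)" and mm="(-73/64)" and C="0.45" and QQ="(318309859154, 318318318319)" and U="(-238738738740, -198943661971)" and UA="(39578580638, 56996185376)" and UB="(1566464045, 3248565148)" and WW="(889256194395, 922409302770)" and B="(-1383613954155, -1111570242993)" and PA="(-908894315198, -906937174602)" and PB="(-27367365802, 27367365802)" and PC="(416128534806, 417026526501)" and PD="(-59646189435, 59646189435)" and PE="(-948865287848, -706016354003)" and PF="(977703626097, 1295424726573)"])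
  apply simp
  apply (rule inv_pi)
  apply assumption
  apply assumption
  apply simp
  apply simp
  apply (rule sin_approx, simp add: Psin_def power_divide)
  apply (rule cos_approx, simp add: Pcos_def power_divide)
  by (simp_all add: mulchk_def)

lemma cb_38: "okI 0.45 (real_of_int (-625000000000) / real_of_int 1000000000000) (real_of_int (-500000000000) / real_of_int 1000000000000)"
  apply (rule okI_cell, rule cellZ[where S="(1000000000000)" and L="(-625000000000)" and H="(-500000000000)" and M="(-1015625000000)" and CC="(450000000000)" and SV="(-849810148290)" and CV="(527088903187)" and E="(2)" and R="(65625000000)" and CDl="(997846679687)" and mm="(-65/64)" and C="0.45" and QQ="(318309859154, 318318318319)" and U="(-198948948950, -159154929577)" and UA="(25330291608, 39580684289)" and UB="(641623672, 1566630569)" and WW="(922405261990, 949981040457)" and B="(-1187476300572, -922405261990)" and PA="(-849810148292, -847980234833)" and PB="(-34590209272, 34590209272)" and PC="(525953911943, 527088903189)" and PD="(-55768790982, 55768790982)" and PE="(-1163471536579, -935950603620)" and PF="(750275239627, 1050204464825)"])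
  apply simp
  apply (rule inv_pi)
  apply assumption
  apply assumption
  apply simp
  apply simp
  apply (rule sin_approx, simp add: Psin_def power_divide)
  apply (rule cos_approx, simp add: Pcos_def power_divide)
  by (simp_all add: mulchk_def)

lemma cb_39: "okI 0.45 (real_of_int (-500000000000) / real_of_int 1000000000000) (real_of_int (-375000000000) / real_of_int 1000000000000)"
  apply (rule okI_cell, rule cellZ[where S="(1000000000000)" and L="(-500000000000)" and H="(-375000000000)" and M="(-890625000000)" and CC="(450000000000)" and SV="(-777464978246)" and CV="(628926233831)" and E="(2)" and R="(65625000000)" and CDl="(997846679687)" and mm="(-57/64)" and C="0.45" and QQ="(318309859154, 318318318319)" and U="(-159159159160, -119366197182)" and UA="(14248289029, 25331637945)" and UB="(203013740, 641691881)" and WW="(949978415990, 971706435683)" and B="(-971706435683, -712483811992)" and PA="(-777464978248, -775790847113)" and PB="(-41273284096, 41273284096)" and PC="(627571954194, 628926233833)" and PD="(-51021139198, 51021139198)" and PE="(-1359066514107, -1150881822130)" and PF="(523331873273, 795573238660)"])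
  apply simp
  apply (rule inv_pi)
  apply assumption
  apply assumption
  apply simp
  apply simp
  apply (rule sin_approx, simp add: Psin_def power_divide)
  apply (rule cos_approx, simp add: Pcos_def power_divide)
  by (simp_all add: mulchk_def)

lemma cb_40: "okI 0.45 (real_of_int (-375000000000) / real_of_int 1000000000000) (real_of_int (-250000000000) / real_of_int 1000000000000)"
  apply (rule okI_cell, rule cellZ[where S="(1000000000000)" and L="(-375000000000)" and H="(-250000000000)" and M="(-765625000000)" and CC="(450000000000)" and SV="(-692987727246)" and CV="(720949380946)" and E="(2)" and R="(65625000000)" and CDl="(997846679687)" and mm="(-49/64)" and C="0.45" and QQ="(318309859154, 318318318319)" and U="(-119369369370, -79577464788)" and UA="(6332572902, 14249046344)" and UB="(40101479, 203035322)" and WW="(971704942633, 987374955676)" and B="(-740531216757, -485852471316)" and PA="(-692987727248, -691495502694)" and PB="(-47312303125, 47312303125)" and PC="(719396945997, 720949380948)" and PD="(-45477319601, 45477319601)" and PE="(-1532668992033, -1347018275861)" and PF="(312977999490, 548215282258)"])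
  apply simp
  apply (rule inv_pi)
  apply assumption
  apply assumption
  apply simp
  apply simp
  apply (rule sin_approx, simp add: Psin_def power_divide)
  apply (rule cos_approx, simp add: Pcos_def power_divide)
  by (simp_all add: mulchk_def)

lemma cb_41: "okI 0.45 (real_of_int (-250000000000) / real_of_int 1000000000000) (real_of_int (-125000000000) / real_of_int 1000000000000)"
  apply (rule okI_cell, rule cellZ[where S="(1000000000000)" and L="(-250000000000)" and H="(-125000000000)" and M="(-640625000000)" and CC="(450000000000)" and SV="(-597696634539)" and CV="(801722354098)" and E="(2)" and R="(65625000000)" and CDl="(997846679687)" and mm="(-41/64)" and C="0.45" and QQ="(318309859154, 318318318319)" and U="(-79579579580, -39788732394)" and UA="(1583143225, 6332909487)" and UB="(2506342, 40105743)" and WW="(987374286768, 996836219893)" and B="(-498418109947, -246843571692)" and PA="(-597696634541, -596409602232)" and PB="(-52613029488, 52613029488)" and PC="(799995989065, 801722354100)" and PD="(-39223841642, 39223841642)" and PE="(-1681879745292, -1521361226852)" and PF="(134232688289, 324126113626)"])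
  apply simp
  apply (rule inv_pi)
  apply assumption
  apply assumption
  apply simp
  apply simp
  apply (rule sin_approx, simp add: Psin_def power_divide)
  apply (rule cos_approx, simp add: Pcos_def power_divide)
  by (simp_all add: mulchk_def)

lemma cb_42: "okI 0.45 (real_of_int (-125000000000) / real_of_int 1000000000000) (real_of_int (0) / real_of_int 1000000000000)"
  apply (rule okI_cell, rule cellZ[where S="(1000000000000)" and L="(-125000000000)" and H="(0)" and M="(-515625000000)" and CC="(450000000000)" and SV="(-493078685754)" and CV="(869984718058)" and E="(2)" and R="(65625000000)" and CDl="(997846679687)" and mm="(-33/64)" and C="0.45" and QQ="(318309859154, 318318318319)" and U="(-39789789790, 0)" and UA="(0, 1583227372)" and UB="(0, 2506609)" and WW="(996836051864, 1000000000000)" and B="(-250000000000, 0)" and PA="(-493078685756, -492016929402)" and PB="(-57092747123, 57092747123)" and PC="(868111362290, 869984718060)" and PD="(-32358288753, 32358288753)" and PE="(-1804686013626, -1671493577636)" and PF="(0, 137542858220)"])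
  apply simp
  apply (rule inv_pi)
  apply assumption
  apply assumption
  apply simp
  apply simp
  apply (rule sin_approx, simp add: Psin_def power_divide)
  apply (rule cos_approx, simp add: Pcos_def power_divide)
  by (simp_all add: mulchk_def)

lemma cb_43: "okI 0.45 (real_of_int (0) / real_of_int 1000000000000) (real_of_int (125000000000) / real_of_int 1000000000000)"
  apply (rule okI_cell, rule cellZ[where S="(1000000000000)" and L="(0)" and H="(125000000000)" and M="(-390625000000)" and CC="(450000000000)" and SV="(-380766408992)" and CV="(924671261467)" and E="(2)" and R="(65625000000)" and CDl="(997846679687)" and mm="(-25/64)" and C="0.45" and QQ="(318309859154, 318318318319)" and U="(0, 39789789790)" and UA="(0, 1583227372)" and UB="(0, 2506609)" and WW="(996836051864, 1000000000000)" and B="(0, 250000000000)" and PA="(-380766408994, -379946496947)" and PB="(-60681551534, 60681551534)" and PC="(922680148054, 924671261469)" and PD="(-24987795591, 24987795591)" and PE="(-1899318114120, -1795371203943)" and PF="(-110361990132, 0)"])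
  apply simp
  apply (rule inv_pi)
  apply assumption
  apply assumption
  apply simp
  apply simp
  apply (rule sin_approx, simp add: Psin_def power_divide)
  apply (rule cos_approx, simp add: Pcos_def power_divide)
  by (simp_all add: mulchk_def)

lemma cb_44: "okI 0.45 (real_of_int (125000000000) / real_of_int 1000000000000) (real_of_int (250000000000) / real_of_int 1000000000000)"
  apply (rule okI_cell, rule cellZ[where S="(1000000000000)" and L="(125000000000)" and H="(250000000000)" and M="(-265625000000)" and CC="(450000000000)" and SV="(-262512399769)" and CV="(964928619105)" and E="(2)" and R="(65625000000)" and CDl="(997846679687)" and mm="(-17/64)" and C="0.45" and QQ="(318309859154, 318318318319)" and U="(39788732394, 79579579580)" and UA="(1583143225, 6332909487)" and UB="(2506342, 40105743)" and WW="(987374286768, 996836219893)" and B="(246843571692, 498418109947)" and PA="(-262512399771, -261947126484)" and PB="(-63323440629, 63323440629)" and PC="(962850818706, 964928619107)" and PD="(-17227376235, 17227376235)" and PE="(-1964297220972, -1891019335357)" and PF="(-162402483726, -49028980039)"])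
  apply simp
  apply (rule inv_pi)
  apply assumption
  apply assumption
  apply simp
  apply simp
  apply (rule sin_approx, simp add: Psin_def power_divide)
  apply (rule cos_approx, simp add: Pcos_def power_divide)
  by (simp_all add: mulchk_def)

lemma cb_45: "okI 0.45 (real_of_int (250000000000) / real_of_int 1000000000000) (real_of_int (375000000000) / real_of_int 1000000000000)"
  apply (rule okI_cell, rule cellZ[where S="(1000000000000)" and L="(250000000000)" and H="(375000000000)" and M="(-140625000000)" and CC="(450000000000)" and SV="(-140161972347)" and CV="(990128588370)" and E="(2)" and R="(65625000000)" and CDl="(997846679687)" and mm="(-9/64)" and C="0.45" and QQ="(318309859154, 318318318319)" and U="(79577464788, 119369369370)" and UA="(6332572902, 14249046344)" and UB="(40101479, 203035322)" and WW="(971704942633, 987374955676)" and B="(485852471316, 740531216757)" and PA="(-140161972349, -139860158722)" and PB="(-64977188612, 64977188612)" and PC="(987996524366, 990128588372)" and PD="(-9198129436, 9198129436)" and PE="(-1998412988740, -1956404405976)" and PF="(-151911952471, -36382076087)"])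
  apply simp
  apply (rule inv_pi)
  apply assumption
  apply assumption
  apply simp
  apply simp
  apply (rule sin_approx, simp add: Psin_def power_divide)
  apply (rule cos_approx, simp add: Pcos_def power_divide)
  by (simp_all add: mulchk_def)

lemma cb_46: "okI 0.45 (real_of_int (375000000000) / real_of_int 1000000000000) (real_of_int (500000000000) / real_of_int 1000000000000)"
  apply (rule okI_cell, rule cellZ[where S="(1000000000000)" and L="(375000000000)" and H="(500000000000)" and M="(-15625000000)" and CC="(450000000000)" and SV="(-15624364225)" and CV="(999877932171)" and E="(2)" and R="(65625000000)" and CDl="(997846679687)" and mm="(-1/64)" and C="0.45" and QQ="(318309859154, 318318318319)" and U="(119366197182, 159159159160)" and UA="(14248289029, 25331637945)" and UB="(203013740, 641691881)" and WW="(949978415990, 971706435683)" and B="(712483811992, 971706435683)" and PA="(-15624364227, -15590719962)" and PB="(-65616989299, 65616989299)" and PC="(997724874707, 999877932173)" and PD="(-1025348903, 1025348903)" and PE="(-2000587379442, -1989561607646)" and PF="(-78942746065, 48610847868)"])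
  apply simp
  apply (rule inv_pi)
  apply assumption
  apply assumption
  apply simp
  apply simp
  apply (rule sin_approx, simp add: Psin_def power_divide)
  apply (rule cos_approx, simp add: Pcos_def power_divide)
  by (simp_all add: mulchk_def)

lemma cb_47: "okI 0.45 (real_of_int (500000000000) / real_of_int 1000000000000) (real_of_int (625000000000) / real_of_int 1000000000000)"
  apply (rule okI_cell, rule cellZ[where S="(1000000000000)" and L="(500000000000)" and H="(625000000000)" and M="(109375000000)" and CC="(450000000000)" and SV="(109157056875)" and CV="(994024515258)" and E="(2)" and R="(65625000000)" and CDl="(997846679687)" and mm="(7/64)" and C="0.45" and QQ="(318309859154, 318318318319)" and U="(159154929577, 198948948950)" and UA="(25330291608, 39580684289)" and UB="(641623672, 1566630569)" and WW="(922405261990, 949981040457)" and B="(922405261990, 1187476300572)" and PA="(108922006765, 109157056877)" and PB="(-65232858814, 65232858814)" and PC="(991884062075, 994024515260)" and PD="(-7163431858, 7163431858)" and PE="(-1998521578915, -1960185099786)" and PF="(40299099961, 207083891942)"])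
  apply simp
  apply (rule inv_pi)
  apply assumption
  apply assumption
  apply simp
  apply simp
  apply (rule sin_approx, simp add: Psin_def power_divide)
  apply (rule cos_approx, simp add: Pcos_def power_divide)
  by (simp_all add: mulchk_def)

lemma cb_48: "okI 0.45 (real_of_int (625000000000) / real_of_int 1000000000000) (real_of_int (750000000000) / real_of_int 1000000000000)"
  apply (rule okI_cell, rule cellZ[where S="(1000000000000)" and L="(625000000000)" and H="(750000000000)" and M="(234375000000)" and CC="(450000000000)" and SV="(232235118612)" and CV="(972659678245)" and E="(2)" and R="(65625000000)" and CDl="(997846679687)" and mm="(15/64)" and C="0.45" and QQ="(318309859154, 318318318319)" and U="(198943661971, 238738738740)" and UA="(39578580638, 56996185376)" and UB="(1566464045, 3248565148)" and WW="(889256194395, 922409302770)" and B="(1111570242993, 1383613954155)" and PA="(231735042011, 232235118614)" and PB="(-63830791385, 63830791385)" and PC="(970565230400, 972659678247)" and PD="(-15240429660, 15240429660)" and PE="(-1966515155820, -1892028992363)" and PF="(186637368667, 409640924425)"])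
  apply simp
  apply (rule inv_pi)
  apply assumption
  apply assumption
  apply simp
  apply simp
  apply (rule sin_approx, simp add: Psin_def power_divide)
  apply (rule cos_approx, simp add: Pcos_def power_divide)
  by (simp_all add: mulchk_def)

lemma cb_49: "okI 0.45 (real_of_int (750000000000) / real_of_int 1000000000000) (real_of_int (875000000000) / real_of_int 1000000000000)"
  apply (rule okI_cell, rule cellZ[where S="(1000000000000)" and L="(750000000000)" and H="(875000000000)" and M="(359375000000)" and CC="(450000000000)" and SV="(351689228995)" and CV="(936116812267)" and E="(2)" and R="(65625000000)" and CDl="(997846679687)" and mm="(23/64)" and C="0.45" and QQ="(318309859154, 318318318319)" and U="(238732394365, 278528528530)" and UA="(56993156119, 77578141206)" and UB="(3248219844, 6018367993)" and WW="(850862085580, 889261907607)" and B="(1276293128370, 1556208338313)" and PA="(350931929432, 351689228997)" and PB="(-61432665806, 61432665806)" and PC="(934101052917, 936116812269)" and PD="(-23079605653, 23079605653)" and PE="(-1899698750811, -1789145720613)" and PF="(369485920834, 642903737433)"])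
  apply simp
  apply (rule inv_pi)
  apply assumption
  apply assumption
  apply simp
  apply simp
  apply (rule sin_approx, simp add: Psin_def power_divide)
  apply (rule cos_approx, simp add: Pcos_def power_divide)
  by (simp_all add: mulchk_def)

lemma cb_50: "okI 0.45 (real_of_int (875000000000) / real_of_int 1000000000000) (real_of_int (1000000000000) / real_of_int 1000000000000)"
  apply (rule okI_cell, rule cellZ[where S="(1000000000000)" and L="(875000000000)" and H="(1000000000000)" and M="(484375000000)" and CC="(450000000000)" and SV="(465655346585)" and CV="(884966156526)" and E="(2)" and R="(65625000000)" and CDl="(997846679687)" and mm="(31/64)" and C="0.45" and QQ="(318309859154, 318318318319)" and U="(278521126759, 318318318319)" and UA="(77574018051, 101326551778)" and UB="(6017728276, 10267070096)" and WW="(807613966539, 850869692175)" and B="(1413324441443, 1701739384350)" and PA="(464652641466, 465655346587)" and PB="(-58075904023, 58075904023)" and PC="(883060540922, 884966156528)" and PD="(-30558632120, 30558632120)" and PE="(-1797993300848, -1652487636476)" and PF="(574624840350, 891254095978)"])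
  apply simp
  apply (rule inv_pi)
  apply assumption
  apply assumption
  apply simp
  apply simp
  apply (rule sin_approx, simp add: Psin_def power_divide)
  apply (rule cos_approx, simp add: Pcos_def power_divide)
  by (simp_all add: mulchk_def)

lemma cb_51: "okI 0.45 (real_of_int (1000000000000) / real_of_int 1000000000000) (real_of_int (1125000000000) / real_of_int 1000000000000)"
  apply (rule okI_cell, rule cellZ[where S="(1000000000000)" and L="(1000000000000)" and H="(1125000000000)" and M="(609375000000)" and CC="(450000000000)" and SV="(572355068235)" and CV="(820005899897)" and E="(2)" and R="(65625000000)" and CDl="(997846679687)" and mm="(39/64)" and C="0.45" and QQ="(318309859154, 318318318319)" and U="(318309859154, 358108108109)" and UA="(101321166434, 128241417094)" and UB="(10265978767, 16445861059)" and WW="(759963026870, 807623645900)" and B="(1519926053740, 1817153203275)" and PA="(571122604438, 572355068237)" and PB="(-53812887181, 53812887181)" and PC="(818240164533, 820005899899)" and PD="(-37560801354, 37560801354)" and PE="(-1662310833228, -1484325060327)" and PF="(786272517111, 1137843105976)"])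
  apply simp
  apply (rule inv_pi)
  apply assumption
  apply assumption
  apply simp
  apply simp
  apply (rule sin_approx, simp add: Psin_def power_divide)
  apply (rule cos_approx, simp add: Pcos_def power_divide)
  by (simp_all add: mulchk_def)

lemma cb_52: "okI 0.45 (real_of_int (1125000000000) / real_of_int 1000000000000) (real_of_int (1250000000000) / real_of_int 1000000000000)"
  apply (rule okI_cell, rule cellZ[where S="(1000000000000)" and L="(1125000000000)" and H="(1250000000000)" and M="(734375000000)" and CC="(450000000000)" and SV="(670123380473)" and CV="(742249725459)" and E="(2)" and R="(65625000000)" and CDl="(997846679687)" and mm="(47/64)" and C="0.45" and QQ="(318309859154, 318318318319)" and U="(358098591548, 397897897899)" and UA="(128234601268, 158322737153)" and UB="(16444112962, 25066089100)" and WW="(708420614793, 759974910427)" and B="(1593946383284, 1899937276068)" and PA="(668680390183, 670123380475)" and PB="(-48710138234, 48710138234)" and PC="(740651424045, 742249725461)" and PD="(-43976846844, 43976846844)" and PE="(-1494880353198, -1288571712247)" and PF="(988199340837, 1365738597483)"])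
  apply simp
  apply (rule inv_pi)
  apply assumption
  apply assumption
  apply simp
  apply simp
  apply (rule sin_approx, simp add: Psin_def power_divide)
  apply (rule cos_approx, simp add: Pcos_def power_divide)
  by (simp_all add: mulchk_def)

lemma cb_53: "okI 0.45 (real_of_int (1250000000000) / real_of_int 1000000000000) (real_of_int (1375000000000) / real_of_int 1000000000000)"
  apply (rule okI_cell, rule cellZ[where S="(1000000000000)" and L="(1250000000000)" and H="(1375000000000)" and M="(859375000000)" and CC="(450000000000)" and SV="(757434641488)" and CV="(652910992306)" and E="(2)" and R="(65625000000)" and CDl="(997846679687)" and mm="(55/64)" and C="0.45" and QQ="(318309859154, 318318318319)" and U="(397887323942, 437687687689)" and UA="(158314322553, 191570511955)" and UB="(25063424725, 36699261051)" and WW="(653558237140, 708434779620)" and B="(1633895592850, 1948195643955)" and PA="(755803642086, 757434641490)" and PB="(-42847283871, 42847283871)" and PC="(651505065801, 652910992308)" and PD="(-49706648348, 49706648348)" and PE="(-1299575255230, -1071083491572)" and PF="(1164896251581, 1559105760925)"])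
  apply simp
  apply (rule inv_pi)
  apply assumption
  apply assumption
  apply simp
  apply simp
  apply (rule sin_approx, simp add: Psin_def power_divide)
  apply (rule cos_approx, simp add: Pcos_def power_divide)
  by (simp_all add: mulchk_def)

lemma cb_54: "okI 0.45 (real_of_int (1375000000000) / real_of_int 1000000000000) (real_of_int (1500000000000) / real_of_int 1000000000000)"
  apply (rule okI_cell, rule cellZ[where S="(1000000000000)" and L="(1375000000000)" and H="(1500000000000)" and M="(984375000000)" and CC="(450000000000)" and SV="(832926388253)" and CV="(553383801490)" and E="(2)" and R="(65625000000)" and CDl="(997846679687)" and mm="(63/64)" and C="0.45" and QQ="(318309859154, 318318318319)" and U="(437676056336, 477477477479)" and UA="(191560330289, 227984741500)" and UB="(36695360140, 51977042357)" and WW="(596007559356, 653574699563)" and B="(1639020788229, 1960724098689)" and PA="(831132830939, 832926388255)" and PB="(-36315811973, 36315811973)" and PC="(552192188907, 553383801492)" and PD="(-54660794230, 54660794230)" and PE="(-1082214698917, -839901527103)" and PF="(1302721616923, 1704344129585)"])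
  apply simp
  apply (rule inv_pi)
  apply assumption
  apply assumption
  apply simp
  apply simp
  apply (rule sin_approx, simp add: Psin_def power_divide)
  apply (rule cos_approx, simp add: Pcos_def power_divide)
  by (simp_all add: mulchk_def)

lemma cb_55: "okI 0.45 (real_of_int (1500000000000) / real_of_int 1000000000000) (real_of_int (1625000000000) / real_of_int 1000000000000)"
  apply (rule okI_cell, rule cellZ[where S="(1000000000000)" and L="(1500000000000)" and H="(1625000000000)" and M="(1109375000000)" and CC="(450000000000)" and SV="(895420597309)" and CV="(445221241536)" and E="(2)" and R="(65625000000)" and CDl="(997846679687)" and mm="(71/64)" and C="0.45" and QQ="(318309859154, 318318318319)" and U="(477464788731, 517267267269)" and UA="(227972624477, 267565425788)" and UB="(51971517510, 71591257078)" and WW="(536460405501, 596026268557)" and B="(1609381216503, 1937085372811)" and PA="(893492469946, 895420597311)" and PB="(-29217643976, 29217643976)" and PC="(444262537590, 445221241538)" and PD="(-58761976699, 58761976699)" and PE="(-850809800566, -605410303231)" and PF="(1390947670812, 1791103212339)"])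
  apply simp
  apply (rule inv_pi)
  apply assumption
  apply assumption
  apply simp
  apply simp
  apply (rule sin_approx, simp add: Psin_def power_divide)
  apply (rule cos_approx, simp add: Pcos_def power_divide)
  by (simp_all add: mulchk_def)

lemma cb_56: "okI 0.45 (real_of_int (1625000000000) / real_of_int 1000000000000) (real_of_int (1750000000000) / real_of_int 1000000000000)"
  apply (rule okI_cell, rule cellZ[where S="(1000000000000)" and L="(1625000000000)" and H="(1750000000000)" and M="(1234375000000)" and CC="(450000000000)" and SV="(943942067425)" and CV="(330111153016)" and E="(2)" and R="(65625000000)" and CDl="(997846679687)" and mm="(79/64)" and C="0.45" and QQ="(318309859154, 318318318319)" and U="(517253521125, 557057057059)" and UA="(267551205116, 310312564820)" and UB="(71583647359, 96293887886)" and WW="(475668758245, 536481237128)" and B="(1545923464296, 1877684329948)" and PA="(941909457794, 943942067427)" and PB="(-21663544417, 21663544417)" and PC="(329400317962, 330111153018)" and PD="(-61946198175, 61946198175)" and PE="(-615725331353, -380383057421)" and PF="(1422629750412, 1813102526270)"])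
  apply simp
  apply (rule inv_pi)
  apply assumption
  apply assumption
  apply simp
  apply simp
  apply (rule sin_approx, simp add: Psin_def power_divide)
  apply (rule cos_approx, simp add: Pcos_def power_divide)
  by (simp_all add: mulchk_def)

lemma cb_57: "okI 0.45 (real_of_int (1750000000000) / real_of_int 1000000000000) (real_of_int (1875000000000) / real_of_int 1000000000000)"
  apply (rule okI_cell, rule cellZ[where S="(1000000000000)" and L="(1750000000000)" and H="(1875000000000)" and M="(1359375000000)" and CC="(450000000000)" and SV="(977733637288)" and CV="(209849790361)" and E="(2)" and R="(65625000000)" and CDl="(997846679687)" and mm="(87/64)" and C="0.45" and QQ="(318309859154, 318318318319)" and U="(557042253519, 596846846849)" and UA="(310296072205, 356226158594)" and UB="(96283652425, 126897076067)" and WW="(414444758878, 475691508016)" and B="(1450556656073, 1783843155060)" and PA="(975628263584, 977733637290)" and PB="(-13771392493, 13771392493)" and PC="(209397916542, 209849790363)" and PD="(-64163769948, 64163769948)" and PE="(-389728962218, -179889561900)" and PF="(1395227886550, 1768689460586)"])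
  apply simp
  apply (rule inv_pi)
  apply assumption
  apply assumption
  apply simp
  apply simp
  apply (rule sin_approx, simp add: Psin_def power_divide)
  apply (rule cos_approx, simp add: Pcos_def power_divide)
  by (simp_all add: mulchk_def)

lemma cb_58: "okI 0.45 (real_of_int (1875000000000) / real_of_int 1000000000000) (real_of_int (2000000000000) / real_of_int 1000000000000)"
  apply (rule okI_cell, rule cellZ[where S="(1000000000000)" and L="(1875000000000)" and H="(2000000000000)" and M="(1484375000000)" and CC="(450000000000)" and SV="(996268000754)" and CV="(86313791914)" and E="(2)" and R="(65625000000)" and CDl="(997846679687)" and mm="(95/64)" and C="0.45" and QQ="(318309859154, 318318318319)" and U="(596830985913, 636636636638)" and UA="(356207225745, 405306207110)" and UB="(126883587672, 164273121522)" and WW="(353660707301, 414469136183)" and B="(1326227652378, 1657876544732)" and PA="(994122716628, 996268000756)" and PB="(-5664342595, 5664342595)" and PC="(86127930670, 86313791916)" and PD="(-65380087550, 65380087550)" and PE="(-187902977005, -21045808514)" and PF="(1310920828867, 1661080131450)"])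
  apply simp
  apply (rule inv_pi)
  apply assumption
  apply assumption
  apply simp
  apply simp
  apply (rule sin_approx, simp add: Psin_def power_divide)
  apply (rule cos_approx, simp add: Pcos_def power_divide)
  by (simp_all add: mulchk_def)

lemma cb_59: "okI 0.45 (real_of_int (2000000000000) / real_of_int 1000000000000) (real_of_int (2125000000000) / real_of_int 1000000000000)"
  apply (rule okI_cell, rule cellZ[where S="(1000000000000)" and L="(2000000000000)" and H="(2125000000000)" and M="(1609375000000)" and CC="(450000000000)" and SV="(999255935277)" and CV="(-38569104387)" and E="(2)" and R="(65625000000)" and CDl="(997846679687)" and mm="(103/64)" and C="0.45" and QQ="(318309859154, 318318318319)" and U="(636619718308, 676426426428)" and UA="(405284665738, 457552710371)" and UB="(164255660282, 209354482768)" and WW="(294249062025, 353686328807)" and B="(1176996248100, 1503166897430)" and PA="(997104217171, 999255935279)" and PB="(-2531097476, 2531097476)" and PC="(-38569104389, -38486052749)" and PD="(-65576170753, 65576170753)" and PE="(-27482004689, 105651844682)" and PF="(1170608830342, 1505853105912)"])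
  apply simp
  apply (rule inv_pi)
  apply assumption
  apply assumption
  apply simp
  apply simp
  apply (rule sin_approx, simp add: Psin_def power_divide)
  apply (rule cos_approx, simp add: Pcos_def power_divide)
  by (simp_all add: mulchk_def)

lemma cb_60: "okI 0.45 (real_of_int (2125000000000) / real_of_int 1000000000000) (real_of_int (2250000000000) / real_of_int 1000000000000)"
  apply (rule okI_cell, rule cellZ[where S="(1000000000000)" and L="(2125000000000)" and H="(2250000000000)" and M="(1734375000000)" and CC="(450000000000)" and SV="(986650815141)" and CV="(-162850142714)" and E="(2)" and R="(65625000000)" and CDl="(997846679687)" and mm="(111/64)" and C="0.45" and QQ="(318309859154, 318318318319)" and U="(676408450702, 716216216218)" and UA="(457528392181, 512965668374)" and UB="(209332229651, 263133776931)" and WW="(237202440182, 294275445290)" and B="(1008110370773, 1324239503805)" and PA="(984526239896, 986650815143)" and PB="(-10687040616, 10687040616)" and PC="(-162850142716, -162499474191)" and PD="(-64748959744, 64748959744)" and PE="(41172256513, 169335239413)" and PF="(981737396259, 1320714187237)"])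
  apply simp
  apply (rule inv_pi)
  apply assumption
  apply assumption
  apply simp
  apply simp
  apply (rule sin_approx, simp add: Psin_def power_divide)
  apply (rule cos_approx, simp add: Pcos_def power_divide)
  by (simp_all add: mulchk_def)

lemma cb_61: "okI 0.45 (real_of_int (2250000000000) / real_of_int 1000000000000) (real_of_int (2375000000000) / real_of_int 1000000000000)"
  apply (rule okI_cell, rule cellZ[where S="(1000000000000)" and L="(2250000000000)" and H="(2375000000000)" and M="(1859375000000)" and CC="(450000000000)" and SV="(958649339028)" and CV="(-284589959031)" and E="(2)" and R="(65625000000)" and CDl="(997846679687)" and mm="(119/64)" and C="0.45" and QQ="(318309859154, 318318318319)" and U="(716197183096, 756006006008)" and UA="(512938405074, 571545081121)" and UB="(263105807399, 326663779754)" and WW="(183573617511, 237228997252)" and B="(826081278799, 1126837736947)" and PA="(956585059931, 958649339030)" and PB="(-18676216062, 18676216062)" and PC="(-284589959033, -283977145689)" and PD="(-62911362874, 62911362874)" and PE="(8846460498, 146424948579)" and PF="(774788937140, 1101287316761)"])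
  apply simp
  apply (rule inv_pi)
  apply assumption
  apply assumption
  apply simp
  apply simp
  apply (rule sin_approx, simp add: Psin_def power_divide)
  apply (rule cos_approx, simp add: Pcos_def power_divide)
  by (simp_all add: mulchk_def)

lemma cb_62: "okI 0.45 (real_of_int (2375000000000) / real_of_int 1000000000000) (real_of_int (2500000000000) / real_of_int 1000000000000)"
  apply (rule okI_cell, rule cellZ[where S="(1000000000000)" and L="(2375000000000)" and H="(2500000000000)" and M="(1984375000000)" and CC="(450000000000)" and SV="(915688460608)" and CV="(-401888844221)" and E="(2)" and R="(65625000000)" and CDl="(997846679687)" and mm="(127/64)" and C="0.45" and QQ="(318309859154, 318318318319)" and U="(755985915490, 795795795798)" and UA="(571514704419, 633290948610)" and UB="(326629057367, 401057425592)" and WW="(134475528371, 183599648530)" and B="(638758759762, 917998242650)" and PA="(913716690043, 915688460610)" and PB="(-26373955403, 26373955403)" and PC="(-401888844223, -401023448807)" and PD="(-60092055228, 60092055228)" and PE="(-187723422337, 18583484647)" and PF="(566797944662, 864811642367)"])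
  apply simp
  apply (rule inv_pi)
  apply assumption
  apply assumption
  apply simp
  apply simp
  apply (rule sin_approx, simp add: Psin_def power_divide)
  apply (rule cos_approx, simp add: Pcos_def power_divide)
  by (simp_all add: mulchk_def)

lemma cb_63: "okI 0.45 (real_of_int (2500000000000) / real_of_int 1000000000000) (real_of_int (2625000000000) / real_of_int 1000000000000)"
  apply (rule okI_cell, rule cellZ[where S="(1000000000000)" and L="(2500000000000)" and H="(2625000000000)" and M="(2109375000000)" and CC="(450000000000)" and SV="(858438570020)" and CV="(-512916388413)" and E="(3)" and R="(65625000000)" and CDl="(997846679687)" and mm="(135/64)" and C="0.45" and QQ="(318309859154, 318318318319)" and U="(795774647885, 835585585588)" and UA="(633257290216, 698203270843)" and UB="(401014795611, 487487807416)" and WW="(91081265729, 134500215180)" and B="(455406328645, 706126129695)" and PA="(856590076806, 858438570023)" and PB="(-33660137990, 33660137990)" and PC="(-512916388416, -511811915131)" and PD="(-56335031158, 56335031158)" and PE="(-526515919232, -184964049245)" and PF="(374767502168, 629934207996)"])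
  apply simp
  apply (rule inv_pi)
  apply assumption
  apply assumption
  apply simp
  apply simp
  apply (rule sin_approx, simp add: Psin_def power_divide)
  apply (rule cos_approx, simp add: Pcos_def power_divide)
  by (simp_all add: mulchk_def)

lemma cb_64: "okI 0.45 (real_of_int (2625000000000) / real_of_int 1000000000000) (real_of_int (2750000000000) / real_of_int 1000000000000)"
  apply (rule okI_cell, rule cellZ[where S="(1000000000000)" and L="(2625000000000)" and H="(2750000000000)" and M="(2234375000000)" and CC="(450000000000)" and SV="(787793032659)" and CV="(-615940043914)" and E="(6)" and R="(65625000000)" and CDl="(997846679687)" and mm="(143/64)" and C="0.45" and QQ="(318309859154, 318318318319)" and U="(835563380279, 875375375378)" and UA="(698166162463, 766282047819)" and UB="(487435990408, 587188176810)" and WW="(54624081171, 91103665483)" and B="(286776426147, 501070160157)" and PA="(786096661913, 787793032665)" and PB="(-40421065383, 40421065383)" and PC="(-615940043920, -614613727699)" and PD="(-51698917769, 51698917769)" and PE="(-1016900304711, -520480007501)" and PF="(213842182637, 414993370754)"])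
  apply simp
  apply (rule inv_pi)
  apply assumption
  apply assumption
  apply simp
  apply simp
  apply (rule sin_approx, simp add: Psin_def power_divide)
  apply (rule cos_approx, simp add: Pcos_def power_divide)
  by (simp_all add: mulchk_def)

lemma cb_65: "okI 0.45 (real_of_int (2750000000000) / real_of_int 1000000000000) (real_of_int (2875000000000) / real_of_int 1000000000000)"
  apply (rule okI_cell, rule cellZ[where S="(1000000000000)" and L="(2750000000000)" and H="(2875000000000)" and M="(2359375000000)" and CC="(450000000000)" and SV="(704854248507)" and CV="(-709352161042)" and E="(14)" and R="(65625000000)" and CDl="(997846679687)" and mm="(151/64)" and C="0.45" and QQ="(318309859154, 318318318319)" and U="(875352112673, 915165165168)" and UA="(766241321161, 837527279537)" and UB="(587125762254, 701451943969)" and WW="(26397384894, 54643119933)" and B="(145185616917, 314197939615)" and PA="(703336471522, 704854248521)" and PB="(-46551235570, 46551235570)" and PC="(-709352161056, -707824698610)" and PD="(-46256060060, 46256060060)" and PE="(-1668920691253, -1007406670052)" and PF="(95355769663, 236090054917)"])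
  apply simp
  apply (rule inv_pi)
  apply assumption
  apply assumption
  apply simp
  apply simp
  apply (rule sin_approx, simp add: Psin_def power_divide)
  apply (rule cos_approx, simp add: Pcos_def power_divide)
  by (simp_all add: mulchk_def)

lemma cb_66: "okI 0.45 (real_of_int (2875000000000) / real_of_int 1000000000000) (real_of_int (3000000000000) / real_of_int 1000000000000)"
  apply (rule okI_cell, rule cellZ[where S="(1000000000000)" and L="(2875000000000)" and H="(3000000000000)" and M="(2484375000000)" and CC="(450000000000)" and SV="(610916449551)" and CV="(-791695074960)" and E="(35)" and R="(65625000000)" and CDl="(997846679687)" and mm="(159/64)" and C="0.45" and QQ="(318309859154, 318318318319)" and U="(915140845067, 954954954957)" and UA="(837482766309, 911938965997)" and UB="(701377383864, 831632677704)" and WW="(7754745709, 26411851247)" and B="(44589787826, 158471107482)" and PA="(609600950715, 610916449586)" and PB="(-51954989297, 51954989297)" and PC="(-791695074995, -789990301838)" and PD="(-40091392005, 40091392005)" and PE="(-2486871906975, -1655974993580)" and PF="(24865315101, 105045971038)"])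
  apply simp
  apply (rule inv_pi)
  apply assumption
  apply assumption
  apply simp
  apply simp
  apply (rule sin_approx, simp add: Psin_def power_divide)
  apply (rule cos_approx, simp add: Pcos_def power_divide)
  by (simp_all add: mulchk_def)

lemma cb_67: "okI 0.45 (real_of_int (3000000000000) / real_of_int 1000000000000) (real_of_int (3125000000000) / real_of_int 1000000000000)"
  apply (rule okI_cell, rule cellZ[where S="(1000000000000)" and L="(3000000000000)" and H="(3125000000000)" and M="(2609375000000)" and CC="(450000000000)" and SV="(507445503720)" and CV="(-861683852055)" and E="(90)" and R="(65625000000)" and CDl="(997846679687)" and mm="(167/64)" and C="0.45" and QQ="(318309859154, 318318318319)" and U="(954929577462, 994744744747)" and UA="(911890497911, 989517107202)" and UB="(831544280180, 979144105446)" and WW="(109891041, 7763284359)" and B="(659346246, 48520527244)" and PA="(506352810919, 507445503810)" and PB="(-56548002798, 56548002798)" and PC="(-861683852145, -859828370623)" and PD="(-33301111188, 33301111188)" and PE="(-3467945581196, -2470709571106)" and PF="(296577111, 27365262303)"])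
  apply simp
  apply (rule inv_pi)
  apply assumption
  apply assumption
  apply simp
  apply simp
  apply (rule sin_approx, simp add: Psin_def power_divide)
  apply (rule cos_approx, simp add: Pcos_def power_divide)
  by (simp_all add: mulchk_def)

lemma cb_68: "okI 0.45 (real_of_int (3125000000000) / real_of_int 1000000000000) (real_of_int (3141592920354) / real_of_int 1000000000000)"
  apply (rule okI_cell, rule cellZ[where S="(1000000000000)" and L="(3125000000000)" and H="(3141592920354)" and M="(2687500000000)" and CC="(450000000000)" and SV="(438647099079)" and CV="(-898659403074)" and E="(161)" and R="(12500000000)" and CDl="(999921875000)" and mm="(43/16)" and C="0.45" and QQ="(318309859154, 318318318319)" and U="(994718309856, 1000026575250)" and UA="(989464515962, 1000053151207)" and UB="(979040028347, 1000106305240)" and WW="(-559974, 110996424)" and B="(-3518421, 697411160)" and PA="(438612829613, 438647099240)" and PB="(-11233242541, 11233242541)" and PC="(-898659403235, -898589195147)" and PD="(-5483088741, 5483088741)" and PE="(-3617146658412, -3460107553583)" and PF="(-1582869, 313751572)"])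
  apply simp
  apply (rule inv_pi)
  apply assumption
  apply assumption
  apply simp
  apply simp
  apply (rule sin_approx, simp add: Psin_def power_divide)
  apply (rule cos_approx, simp add: Pcos_def power_divide)
  by (simp_all add: mulchk_def)

lemma allb: "okI 0.45 (real_of_int (-3141592920354) / real_of_int 1000000000000) (real_of_int (3141592920354) / real_of_int 1000000000000)"
  by (rule okI_trans[OF cb_0 okI_trans[OF cb_1 okI_trans[OF cb_2 okI_trans[OF cb_3 okI_trans[OF cb_4 okI_trans[OF cb_5 okI_trans[OF cb_6 okI_trans[OF cb_7 okI_trans[OF cb_8 okI_trans[OF cb_9 okI_trans[OF cb_10 okI_trans[OF cb_11 okI_trans[OF cb_12 okI_trans[OF cb_13 okI_trans[OF cb_14 okI_trans[OF cb_15 okI_trans[OF cb_16 okI_trans[OF cb_17 okI_trans[OF cb_18 okI_trans[OF cb_19 okI_trans[OF cb_20 okI_trans[OF cb_21 okI_trans[OF cb_22 okI_trans[OF cb_23 okI_trans[OF cb_24 okI_trans[OF cb_25 okI_trans[OF cb_26 okI_trans[OF cb_27 okI_trans[OF cb_28 okI_trans[OF cb_29 okI_trans[OF cb_30 okI_trans[OF cb_31 okI_trans[OF cb_32 okI_trans[OF cb_33 okI_trans[OF cb_34 okI_trans[OF cb_35 okI_trans[OF cb_36 okI_trans[OF cb_37 okI_trans[OF cb_38 okI_trans[OF cb_39 okI_trans[OF cb_40 okI_trans[OF cb_41 okI_trans[OF cb_42 okI_trans[OF cb_43 okI_trans[OF cb_44 okI_trans[OF cb_45 okI_trans[OF cb_46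 okI_trans[OF cb_47 okI_trans[OF cb_48 okI_trans[OF cb_49 okI_trans[OF cb_50 okI_trans[OF cb_51 okI_trans[OF cb_52 okI_trans[OF cb_53 okI_trans[OF cb_54 okI_trans[OF cb_55 okI_trans[OF cb_56 okI_trans[OF cb_57 okI_trans[OF cb_58 okI_trans[OF cb_59 okI_trans[OF cb_60 okI_trans[OF cb_61 okI_trans[OF cb_62 okI_trans[OF cb_63 okI_trans[OF cb_64 okI_trans[OF cb_65 okI_trans[OF cb_66 okI_trans[OF cb_67 cb_68]]]]]]]]]]]]]]]]]]]]]]]]]]]]]]]]]]]]]]]]]]]]]]]]]]]]]]]]]]]]]]]]]]]])

lemma FFb: assumes "-pi < t" "t < pi" shows "FF 0.45 t < 0"
proof -
  have "real_of_int (-3141592920354) / real_of_int 1000000000000 \<le> t" "t \<le> real_of_int (3141592920354) / real_of_int 1000000000000"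
    using assms pi_bnds by simp_all
  then show ?thesis using allb unfolding okI_def by blast
qed
definition ww :: "real \<Rightarrow> real" where "ww x = 1 - (x/pi)^2"
definition gd :: "real \<Rightarrow> real" where "gd x = -2*x/(pi^2 * (ww x)^2)"
definition gdd :: "real \<Rightarrow> real" where "gdd x = -2/(pi^2*(ww x)^2) - 8*x^2/(pi^4*(ww x)^3)"
definition z1d :: "real \<Rightarrow> real" where "z1d x = 2*exp(1 - 1/ww x)*gd x"
definition z1dd :: "real \<Rightarrow> real" where "z1dd x = 2*exp(1 - 1/ww x)*(gdd x + (gd x)^2)"

lemma ww_pos: "\<bar>x\<bar> < pi \<Longrightarrow> ww x > 0"
proof -
  assume a: "\<bar>x\<bar> < pi"
  have "\<bar>x/pi\<bar> < 1" using a by (simp add: abs_divide)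
  then have "(x/pi)^2 < 1" by (simp add: abs_square_less_1)
  then show ?thesis by (simp add: ww_def)
qed

lemma ww_deriv: "(ww has_real_derivative (-2*x/pi^2)) (at x)"
  unfolding ww_def[abs_def]
  apply (rule DERIV_cong)
   apply (auto intro!: derivative_eq_intros simp: power2_eq_square)
  done

lemma g_deriv: "ww x \<noteq> 0 \<Longrightarrow> ((\<lambda>x. 1 - 1/ww x) has_real_derivative gd x) (at x)"
  unfolding gd_def
  apply (rule DERIV_cong)
   apply (auto intro!: derivative_eq_intros ww_deriv)[1]
  apply (simp add: field_simps power2_eq_square)
  done

lemma gd_deriv: "ww x \<noteq> 0 \<Longrightarrow> (gd has_real_derivative gdd x) (at x)"
  unfolding gd_def[abs_def] gdd_def
  apply (rule DERIV_cong)
   apply (auto intro!: derivative_eq_intros ww_deriv)[1]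
  apply (simp add: field_simps power2_eq_square eval_nat_numeral)
  done

lemma z1d_deriv0: "ww x \<noteq> 0 \<Longrightarrow> (z1d has_real_derivative z1dd x) (at x)"
proof -
  assume w: "ww x \<noteq> 0"
  have e: "((\<lambda>x. exp(1 - 1/ww x)) has_real_derivative exp(1 - 1/ww x) * gd x) (at x)"
    by (rule DERIV_chain2[OF DERIV_exp g_deriv[OF w]])
  have "((\<lambda>x. 2*exp(1 - 1/ww x)*gd x) has_real_derivative 2*(exp(1 - 1/ww x) * gd x) * gd x + 2*exp(1 - 1/ww x) * gdd x) (at x)"
    using DERIV_mult[OF DERIV_cmult[OF e, of 2] gd_deriv[OF w]] by (simp add: algebra_simps)
  then show ?thesis unfolding z1d_def[abs_def] z1dd_def
    by (rule DERIV_cong) (simp add: algebra_simps power2_eq_square)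
qed

lemma z1_deriv: "\<bar>x\<bar> < pi \<Longrightarrow> (z1 has_real_derivative z1d x) (at x)"
proof -
  assume a: "\<bar>x\<bar> < pi"
  then have w: "ww x \<noteq> 0" using ww_pos by force
  have "((\<lambda>x. 2*exp(1 - 1/ww x) - 1) has_real_derivative z1d x) (at x)"
    unfolding z1d_def using DERIV_diff[OF DERIV_cmult[OF DERIV_chain2[OF DERIV_exp g_deriv[OF w]], of 2] DERIV_const[of 1]]
    by (simp add: algebra_simps)
  then show ?thesis
    by (rule has_field_derivative_transform_within_open[of _ _ x "{-pi<..<pi}"])
       (use a in \<open>auto simp: z1_def ww_def\<close>)
qed

lemma deriv_z1_in: "\<bar>x\<bar> < pi \<Longrightarrow> deriv z1 x = z1d x"
  using z1_deriv DERIV_imp_deriv by blast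

lemma z1d_deriv: "\<bar>x\<bar> < pi \<Longrightarrow> (z1d has_real_derivative z1dd x) (at x)"
  using z1d_deriv0 ww_pos by force

lemma deriv_z1_deriv_in: "\<bar>x\<bar> < pi \<Longrightarrow> (deriv z1 has_real_derivative z1dd x) (at x)"
  apply (rule has_field_derivative_transform_within_open[OF z1d_deriv, of x "{-pi<..<pi}"])
  apply (auto simp: deriv_z1_in)
  done

lemma z1_out: "pi < x \<Longrightarrow> (z1 has_real_derivative 0) (at x)"
  apply (rule has_field_derivative_transform_within_open[of "\<lambda>x. -1" 0 x "{pi<..}"])
  apply (auto simp: z1_def)
  done

lemma deriv_z1_out: "pi < x \<Longrightarrow> deriv z1 x = 0"
  using z1_out DERIV_imp_deriv by blast

lemma z1_pi: "(z1 has_real_derivative 0) (at pi)"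
  unfolding DERIV_def
proof (rule filterlim_split_at_real)
  have "eventually (\<lambda>h. h \<in> {0<..<1}) (at_right (0::real))" by (rule eventually_at_right_real) simp
  then have "eventually (\<lambda>h. (z1 (pi + h) - z1 pi) / h = 0) (at_right 0)"
    by eventually_elim (auto simp: z1_def)
  then show "((\<lambda>h. (z1 (pi + h) - z1 pi) / h) \<longlongrightarrow> 0) (at_right 0)"
    by (subst tendsto_cong) auto
next
  have "eventually (\<lambda>h. h \<in> {-pi<..<0}) (at_left (0::real))" by (rule eventually_at_left_real) simp
  then have "eventually (\<lambda>h. (z1 (pi + h) - z1 pi) / h = 2 * exp (1 - 1/(1-((pi+h)/pi)^2)) / h) (at_left 0)"
    by eventually_elim (auto simp: z1_def)
  moreover have "((\<lambda>h. 2 * exp (1 - 1/(1-((pi+h)/pi)^2)) / h) \<longlongrightarrow> 0) (at_left 0)"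
    by real_asymp
  ultimately show "((\<lambda>h. (z1 (pi + h) - z1 pi) / h) \<longlongrightarrow> 0) (at_left 0)"
    by (subst tendsto_cong) auto
qed

lemma deriv_z1_pi: "deriv z1 pi = 0"
  using z1_pi DERIV_imp_deriv by blast

lemma deriv2_z1_pi: "deriv (deriv z1) pi = 0"
proof -
  have "(deriv z1 has_real_derivative 0) (at pi)"
    unfolding DERIV_def
  proof (rule filterlim_split_at_real)
    have "eventually (\<lambda>h. h \<in> {0<..<1}) (at_right (0::real))" by (rule eventually_at_right_real) simp
    then have "eventually (\<lambda>h. (deriv z1 (pi + h) - deriv z1 pi) / h = 0) (at_right 0)"
      by eventually_elim (auto simp: deriv_z1_out deriv_z1_pi)
    then show "((\<lambda>h. (deriv z1 (pi + h) - deriv z1 pi) / h) \<longlongrightarrow> 0) (at_right 0)"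
      by (subst tendsto_cong) auto
  next
    have "eventually (\<lambda>h. h \<in> {-pi<..<0}) (at_left (0::real))" by (rule eventually_at_left_real) simp
    then have "eventually (\<lambda>h. (deriv z1 (pi + h) - deriv z1 pi) / h =
        2 * exp (1 - 1/(1-((pi+h)/pi)^2)) * (-2*(pi+h)/(pi^2*(1-((pi+h)/pi)^2)^2)) / h) (at_left 0)"
    proof eventually_elim
      case (elim h)
      then have "\<bar>pi + h\<bar> < pi" by auto
      then show ?case by (simp add: deriv_z1_in deriv_z1_pi z1d_def gd_def ww_def)
    qed
    moreover have "((\<lambda>h. 2 * exp (1 - 1/(1-((pi+h)/pi)^2)) * (-2*(pi+h)/(pi^2*(1-((pi+h)/pi)^2)^2)) / h) \<longlongrightarrow> 0) (at_left 0)"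
      by real_asymp
    ultimately show "((\<lambda>h. (deriv z1 (pi + h) - deriv z1 pi) / h) \<longlongrightarrow> 0) (at_left 0)"
      by (subst tendsto_cong) auto
  qed
  then show ?thesis using DERIV_imp_deriv by blast
qed

lemma deriv_z2: "deriv (z2 C) = (\<lambda>x. cos (x - C))"
proof
  fix x
  have "(z2 C has_real_derivative cos (x - C)) (at x)"
    unfolding z2_def by (rule derivative_eq_intros refl | simp)+
  then show "deriv (z2 C) x = cos (x - C)" using DERIV_imp_deriv by blast
qed

lemma deriv2_z2: "deriv (deriv (z2 C)) x = - sin (x - C)"
proof -
  have "((\<lambda>x. cos (x - C)) has_real_derivative - sin (x - C)) (at x)"
    by (rule derivative_eq_intros refl | simp)+
  then show ?thesis unfolding deriv_z2 using DERIV_imp_deriv by blast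
qed

lemma alg1: "(W::real) \<noteq> 0 \<Longrightarrow> (p::real) \<noteq> 0 \<Longrightarrow> (-2/(p^2*W^2) - 8*x^2/(p^4*W^3)) * (p^2*W^4) = -2*W^2 - 8*x^2*W/p^2"
  by (simp add: field_simps eval_nat_numeral)
lemma alg2: "(W::real) \<noteq> 0 \<Longrightarrow> (p::real) \<noteq> 0 \<Longrightarrow> (-2*x/(p^2*W^2))^2 * (p^2*W^4) = 4*x^2/p^2"
  by (simp add: field_simps eval_nat_numeral)
lemma alg3: "(W::real) \<noteq> 0 \<Longrightarrow> (p::real) \<noteq> 0 \<Longrightarrow> (-2*x/(p^2*W^2)) * (p^2*W^4) = -2*x*W^2"
  by (simp add: field_simps eval_nat_numeral)
lemma alg4: "(p::real) \<noteq> 0 \<Longrightarrow> -2*(1 - (x/p)^2)^2 - 8*x^2*(1 - (x/p)^2)/p^2 + 4*x^2/p^2 = 6*(x/p)^4 - 2"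
  by (simp add: field_simps eval_nat_numeral)

lemma key_identity:
  assumes "\<bar>x\<bar> < pi"
  shows "(gdd x + (gd x)^2) * (pi^2 * (ww x)^4) = 6*(x/pi)^4 - 2"
    and "gd x * (pi^2 * (ww x)^4) = -2*x*(ww x)^2"
proof -
  have w: "ww x \<noteq> 0" using ww_pos[OF assms] by simp
  have p: "pi \<noteq> 0" by simp
  show "gd x * (pi^2 * (ww x)^4) = -2*x*(ww x)^2"
    unfolding gd_def by (rule alg3[OF w p])
  have "(gdd x + (gd x)^2) * (pi^2 * (ww x)^4) = gdd x * (pi^2 * (ww x)^4) + (gd x)^2 * (pi^2 * (ww x)^4)"
    by (simp add: algebra_simps)
  also have "\<dots> = -2*(ww x)^2 - 8*x^2*(ww x)/pi^2 + 4*x^2/pi^2"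
    unfolding gdd_def gd_def alg1[OF w p] alg2[OF w p] by simp
  also have "\<dots> = 6*(x/pi)^4 - 2"
    unfolding ww_def by (rule alg4[OF p])
  finally show "(gdd x + (gd x)^2) * (pi^2 * (ww x)^4) = 6*(x/pi)^4 - 2" .
qed

lemma FF_neg:
  assumes "C \<in> {0.15, 0.45}" "-pi < t" "t < pi"
  shows "FF C t < 0"
proof -
  from assms(1) consider "C = 0.15" | "C = 0.45" by blast
  then show ?thesis
  proof cases
    case 1 then show ?thesis using FFa[OF assms(2,3)] by (simp only:)
  next
    case 2 then show ?thesis using FFb[OF assms(2,3)] by (simp only:)
  qed
qed

lemma num_identity:
  assumes ax: "\<bar>x\<bar> < pi"
  shows "- z1dd x * cos (x - C) + (- sin (x - C)) * z1d x
         = -2 * exp (1 - 1 / ww x) * FF C x / (pi^2 * (ww x)^4)"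
proof -
  have w: "ww x \<noteq> 0" using ww_pos[OF ax] by simp
  have d: "pi^2 * (ww x)^4 \<noteq> 0" using w by simp
  define E where "E = exp (1 - 1 / ww x)"
  have k1: "(gdd x + (gd x)^2) * (pi^2 * (ww x)^4) = 6*(x/pi)^4 - 2" by (rule key_identity(1)[OF ax])
  have k2: "gd x * (pi^2 * (ww x)^4) = -2*x*(ww x)^2" by (rule key_identity(2)[OF ax])
  have "(- z1dd x * cos (x - C) + (- sin (x - C)) * z1d x) * (pi^2 * (ww x)^4)
      = -2 * E * ((gdd x + (gd x)^2) * (pi^2 * (ww x)^4) * cos (x - C) + gd x * (pi^2 * (ww x)^4) * sin (x - C))"
    unfolding z1dd_def z1d_def E_def by (simp add: algebra_simps)
  also have "\<dots> = -2 * E * ((6*(x/pi)^4 - 2) * cos (x - C) + (-2*x*(ww x)^2) * sin (x - C))"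
    by (simp only: k1 k2)
  also have "\<dots> = -2 * E * FF C x"
    unfolding FF_def ww_def by (simp add: algebra_simps)
  finally show ?thesis using d unfolding E_def by (simp add: field_simps)
qed

theorem corollary1:
  fixes C :: real
  assumes "C \<in> {0.15, 0.45}"
  shows "\<forall>x \<in> {-pi<..pi}. curvature C x = 0 \<longleftrightarrow> x = pi"
proof
  fix x assume x: "x \<in> {-pi<..pi}"
  show "curvature C x = 0 \<longleftrightarrow> x = pi"
  proof (cases "x = pi")
    case True
    then show ?thesis by (simp add: curvature_def deriv_z1_pi deriv2_z1_pi)
  next
    case False
    with x have ax: "\<bar>x\<bar> < pi" by auto
    have d1: "deriv z1 x = z1d x" by (rule deriv_z1_in[OF ax])
    have d2: "deriv (deriv z1) x = z1dd x" using deriv_z1_deriv_in[OF ax] DERIV_imp_deriv by blast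
    define N where "N = - deriv (deriv z1) x * deriv (z2 C) x + deriv (deriv (z2 C)) x * deriv z1 x"
    have Neq: "N = -2 * exp (1 - 1 / ww x) * FF C x / (pi^2 * (ww x)^4)"
      unfolding N_def d1 d2 deriv2_z2 using num_identity[OF ax] by (simp add: deriv_z2)
    have F: "FF C x < 0" using FF_neg[OF assms] x False by auto
    have wp: "ww x > 0" by (rule ww_pos[OF ax])
    have "-2 * exp (1 - 1 / ww x) * FF C x > 0" using F by (simp add: mult_neg_pos)
    moreover have "pi^2 * (ww x)^4 > 0" using wp by simp
    ultimately have Npos: "N > 0" unfolding Neq by (rule divide_pos_pos)
    have B: "(deriv z1 x)^2 + (deriv (z2 C) x)^2 > 0"
    proof (rule ccontr)
      assume "\<not> ?thesis"
      then have "deriv z1 x = 0" "deriv (z2 C) x = 0"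
        by (smt (verit) zero_le_power2 power_eq_0_iff)+
      then have "N = 0" unfolding N_def by simp
      with Npos show False by simp
    qed
    have "curvature C x = N / ((deriv z1 x)^2 + (deriv (z2 C) x)^2) powr (3/2)"
      unfolding curvature_def N_def ..
    moreover have "((deriv z1 x)^2 + (deriv (z2 C) x)^2) powr (3/2) > 0" using B by (subst powr_gt_zero) linarith
    ultimately have "curvature C x > 0" using Npos by simp
    then show ?thesis using False by simp
  qed
qed

end
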